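(* Let $T$ be a tree with $n$ vertices and matching number $\beta$. (i) If $0\leq \alpha< \frac{1}{2}$, then $$S_k(A_{\alpha}(T))\leq \begin{cases} \alpha(n+2k-2)+(1-2\alpha)\sqrt{k(n-1)}, & \text{if } 1\leq k \leq \beta;\\ \alpha(n+2k-2)+(1-2\alpha)\sqrt{\beta (n-1)}, & \text{if } \beta< k \leq n-\beta;\\ \alpha(n+2k-2)+(1-2\alpha)\sqrt{(n-k)(n-1)}, & \text{if } n-\beta< k \leq n. \end{cases}$$ (ii) If $\frac{1}{2} \leq \alpha<1$, then $S_k(A_{\alpha}(T))\leq \alpha(n+2k-2)$ for $1\leq k \leq n$.
   Context: $A_{\alpha}(G)=\alpha D(G)+(1-\alpha)A(G)$, where $A(G)$ is the adjacency matrix and $D(G)$ the diagonal degree matrix. For a real symmetric matrix $M$ with eigenvalues $\lambda_1(M)\geq\cdots\geq\lambda_n(M)$, $S_k(M)=\sum_{i=1}^k\lambda_i(M)$. The matching number is the maximum number of edges in a matching (set of pairwise disjoint edges). *)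

theory Defs
  imports "Jordan_Normal_Form.Char_Poly" "HOL-Library.Multiset"
begin

definition simple_graph :: "nat \<Rightarrow> (nat \<Rightarrow> nat \<Rightarrow> bool) \<Rightarrow> bool" where
  "simple_graph n E \<longleftrightarrow>
     (\<forall>u v. E u v \<longrightarrow> u < n \<and> v < n) \<and>
     (\<forall>u v. E u v \<longrightarrow> E v u) \<and>
     (\<forall>u. \<not> E u u)"

definition connected_graph :: "nat \<Rightarrow> (nat \<Rightarrow> nat \<Rightarrow> bool) \<Rightarrow> bool" where
  "connected_graph n E \<longleftrightarrow> (\<forall>u v. u < n \<longrightarrow> v < n \<longrightarrow> E\<^sup>*\<^sup>* u v)"

definition is_cycle :: "(nat \<Rightarrow> nat \<Rightarrow> bool) \<Rightarrow> nat list \<Rightarrow> bool" where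
  "is_cycle E vs \<longleftrightarrow>
     length vs \<ge> 3 \<and> distinct vs \<and>
     (\<forall>i. Suc i < length vs \<longrightarrow> E (vs ! i) (vs ! Suc i)) \<and>
     E (last vs) (hd vs)"

definition acyclic_graph :: "(nat \<Rightarrow> nat \<Rightarrow> bool) \<Rightarrow> bool" where
  "acyclic_graph E \<longleftrightarrow> (\<nexists>vs. is_cycle E vs)"

definition is_tree :: "nat \<Rightarrow> (nat \<Rightarrow> nat \<Rightarrow> bool) \<Rightarrow> bool" where
  "is_tree n E \<longleftrightarrow> n \<ge> 1 \<and> simple_graph n E \<and> connected_graph n E \<and> acyclic_graph E"

definition edge_set :: "nat \<Rightarrow> (nat \<Rightarrow> nat \<Rightarrow> bool) \<Rightarrow> nat set set" where
  "edge_set n E = {{u, v} | u v. u < n \<and> v < n \<and> E u v}"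

definition is_matching :: "nat \<Rightarrow> (nat \<Rightarrow> nat \<Rightarrow> bool) \<Rightarrow> nat set set \<Rightarrow> bool" where
  "is_matching n E M \<longleftrightarrow> M \<subseteq> edge_set n E \<and> pairwise disjnt M"

definition matching_number :: "nat \<Rightarrow> (nat \<Rightarrow> nat \<Rightarrow> bool) \<Rightarrow> nat" where
  "matching_number n E = Max {card M | M. is_matching n E M}"

definition degree :: "nat \<Rightarrow> (nat \<Rightarrow> nat \<Rightarrow> bool) \<Rightarrow> nat \<Rightarrow> nat" where
  "degree n E u = card {v. v < n \<and> E u v}"

definition adj_mat :: "nat \<Rightarrow> (nat \<Rightarrow> nat \<Rightarrow> bool) \<Rightarrow> real mat" where
  "adj_mat n E = mat n n (\<lambda>(i, j). if E i j then 1 else 0)"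

definition deg_mat :: "nat \<Rightarrow> (nat \<Rightarrow> nat \<Rightarrow> bool) \<Rightarrow> real mat" where
  "deg_mat n E = mat n n (\<lambda>(i, j). if i = j then real (degree n E i) else 0)"

definition A_alpha :: "real \<Rightarrow> nat \<Rightarrow> (nat \<Rightarrow> nat \<Rightarrow> bool) \<Rightarrow> real mat" where
  "A_alpha \<alpha> n E = \<alpha> \<cdot>\<^sub>m deg_mat n E + (1 - \<alpha>) \<cdot>\<^sub>m adj_mat n E"

text \<open>Eigenvalues (with multiplicity) of a real matrix, listed in non-increasing order:
the real roots of the characteristic polynomial counted with multiplicity.  For a real
symmetric matrix these are all n eigenvalues.\<close>
definition eigenvalues_desc :: "real mat \<Rightarrow> real list" where
  "eigenvalues_desc M = rev (sorted_list_of_multiset (proots (char_poly M)))"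

definition S_k :: "nat \<Rightarrow> real mat \<Rightarrow> real" where
  "S_k k M = sum_list (take k (eigenvalues_desc M))"

end

theory Submission
  imports Defs "Jordan_Normal_Form.Schur_Decomposition"
begin

lemma cnj_mult_self: "cnj z * z = complex_of_real ((cmod z)^2)"
proof -
  have "cnj z * z = z * cnj z" by (rule mult.commute)
  also have "\<dots> = complex_of_real ((Re z)^2 + (Im z)^2)" by (rule complex_mult_cnj)
  also have "(Re z)^2 + (Im z)^2 = (cmod z)^2" by (rule cmod_power2[symmetric])
  finally show ?thesis .
qed

lemma real_sym_eigenvalue:
  fixes A :: "real mat"
  assumes A: "A \<in> carrier_mat n n" and n: "n > 0" and sym: "transpose_mat A = A"
  shows "\<exists>e. eigenvalue A e"
proof -
  let ?C = "map_mat complex_of_real A"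
  have C: "?C \<in> carrier_mat n n" using A by auto
  obtain as where cp: "char_poly ?C = (\<Prod>a\<leftarrow>as. [:- a, 1:])" and las: "length as = n"
    using char_poly_factorized[OF C] by blast
  then obtain a where a: "a \<in> set as" using n by (cases as) auto
  have "poly (char_poly ?C) a = 0" unfolding cp using a
    by (induction as) (auto simp: poly_prod_list)
  hence "eigenvalue ?C a" using eigenvalue_root_char_poly[OF C] by simp
  then obtain v where ev: "eigenvector ?C v a" unfolding eigenvalue_def by blast
  hence v: "v \<in> carrier_vec n" "v \<noteq> 0\<^sub>v n" "?C *\<^sub>v v = a \<cdot>\<^sub>v v"
    unfolding eigenvector_def using C by auto
  have Aij: "A $$ (j, i) = A $$ (i, j)" if "i < n" "j < n" for i j
    using arg_cong[OF sym, of "\<lambda>M. M $$ (i,j)"] that A by auto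
  define s where "s = (\<Sum>i<n. cnj (v $ i) * (?C *\<^sub>v v) $ i)"
  have s1: "s = (\<Sum>i<n. \<Sum>j<n. cnj (v $ i) * complex_of_real (A $$ (i,j)) * v $ j)"
    unfolding s_def using A v(1)
    by (auto simp: scalar_prod_def sum_distrib_left mult.assoc intro!: sum.cong)
  have "cnj s = (\<Sum>i<n. \<Sum>j<n. v $ i * complex_of_real (A $$ (i,j)) * cnj (v $ j))"
    unfolding s1 by (simp add: cnj_sum)
  also have "\<dots> = (\<Sum>j<n. \<Sum>i<n. v $ i * complex_of_real (A $$ (i,j)) * cnj (v $ j))"
    by (rule sum.swap)
  also have "\<dots> = s" unfolding s1
    by (intro sum.cong refl, subst Aij, auto simp: mult.commute mult.left_commute)
  finally have cs: "cnj s = s" .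
  define N where "N = (\<Sum>i<n. cnj (v $ i) * v $ i)"
  have s2: "s = a * N" unfolding s_def N_def v(3) using v(1)
    by (auto simp: sum_distrib_left mult.commute mult.left_commute intro!: sum.cong)
  have Nreal: "N = complex_of_real (\<Sum>i<n. (cmod (v $ i))^2)"
    unfolding N_def of_real_sum by (intro sum.cong refl) (rule cnj_mult_self)
  obtain i where i: "i < n" "v $ i \<noteq> 0"
  proof -
    { assume "\<forall>i<n. v $ i = 0"
      hence "v = 0\<^sub>v n" using v(1) by (intro eq_vecI) auto }
    thus ?thesis using v(2) that by blast
  qed
  have "(\<Sum>i<n. (cmod (v $ i))^2) > 0"
    by (rule sum_pos2[of _ i], use i in auto)
  then obtain r where r: "r > 0" "N = complex_of_real r" using Nreal by blast
  have "cnj a * N = a * N" using cs s2 r by (simp)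
  hence "cnj a = a" using r by simp
  hence "Im a = 0" by (simp add: complex_eq_iff)
  hence aR: "complex_of_real (Re a) = a" by (simp add: complex_eq_iff)
  have "poly (char_poly ?C) (complex_of_real (Re a)) = 0" unfolding aR by fact
  hence "complex_of_real (poly (char_poly A) (Re a)) = 0"
    unfolding of_real_hom.char_poly_hom[OF A] of_real_hom.poly_map_poly .
  hence "poly (char_poly A) (Re a) = 0" by simp
  thus ?thesis using eigenvalue_root_char_poly[OF A] by blast
qed

lemma conjugate_real_vec[simp]: "conjugate (v :: real vec) = v"
  by (rule eq_vecI) (auto simp: conjugate_vec_def)

lemma orthonormal_completion:
  fixes v :: "real vec"
  assumes v: "v \<in> carrier_vec n" and v1: "v \<bullet> v = 1"
  shows "\<exists>W \<in> carrier_mat n n. transpose_mat W * W = 1\<^sub>m n \<and> col W 0 = v"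
proof -
  have v0: "v \<noteq> 0\<^sub>v n" using v1 v by auto
  interpret cof_vec_space n "TYPE(real)" .
  define b where "b = basis_completion v"
  from basis_completion[OF v v0, folded b_def]
  have dist_b: "distinct b" and indep: "\<not> lin_dep (set b)" and b: "set b \<subseteq> carrier_vec n"
    and hdb: "hd b = v" and len_b: "length b = n" by auto
  have n: "n > 0" using v0 v by (cases n) auto
  from hdb len_b n obtain vs where bv: "b = v # vs" by (cases b, auto)
  define ws where "ws = gram_schmidt n b"
  from gram_schmidt_result[OF b dist_b indep refl, folded ws_def]
  have ws: "set ws \<subseteq> carrier_vec n" "corthogonal ws" "length ws = n"
    by (auto simp: len_b)
  from gram_schmidt_hd[OF v, of vs, folded bv] have hdws: "hd ws = v" unfolding ws_def .
  define us where "us = map (\<lambda>w. (1 / sqrt (w \<bullet> w)) \<cdot>\<^sub>v w) ws"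
  have lus: "length us = n" unfolding us_def using ws by simp
  have wsi: "ws ! i \<in> carrier_vec n" if "i < n" for i using ws that by auto
  have orth: "ws ! i \<bullet> ws ! j = 0 \<longleftrightarrow> i \<noteq> j" if "i < n" "j < n" for i j
    using corthogonalD[OF ws(2), of i j] that ws(3) by simp
  have pos: "ws ! i \<bullet> ws ! i > 0" if "i < n" for i
  proof -
    have "ws ! i \<bullet> ws ! i \<ge> 0" by (simp add: scalar_prod_def sum_nonneg)
    moreover have "ws ! i \<bullet> ws ! i \<noteq> 0" using orth[OF that that] by simp
    ultimately show ?thesis by simp
  qed
  have usi: "us ! i = (1 / sqrt (ws ! i \<bullet> ws ! i)) \<cdot>\<^sub>v ws ! i" if "i < n" for i
    unfolding us_def using that ws(3) by simp
  have usc: "us ! i \<in> carrier_vec n" if "i < n" for i using usi[OF that] wsi[OF that] by simp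
  have usorth: "us ! i \<bullet> us ! j = (if i = j then 1 else 0)" if "i < n" "j < n" for i j
  proof -
    have "us ! i \<bullet> us ! j = (1 / sqrt (ws ! i \<bullet> ws ! i)) * (1 / sqrt (ws ! j \<bullet> ws ! j)) * (ws ! i \<bullet> ws ! j)"
      unfolding usi[OF that(1)] usi[OF that(2)] using wsi[OF that(1)] wsi[OF that(2)] by simp
    also have "\<dots> = (if i = j then 1 else 0)"
    proof (cases "i = j")
      case True
      with pos[OF that(1)] show ?thesis
        by (simp add: field_simps real_sqrt_mult[symmetric])
    next
      case False
      with orth[OF that] show ?thesis by simp
    qed
    finally show ?thesis .
  qed
  define W where "W = mat n n (\<lambda>(i,j). (us ! j) $ i)"
  have W: "W \<in> carrier_mat n n" unfolding W_def by simp
  have colW: "col W j = us ! j" if "j < n" for j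
    unfolding W_def using that usc[OF that] by (intro eq_vecI) auto
  have "transpose_mat W * W = 1\<^sub>m n"
    by (rule eq_matI) (use W colW usorth in \<open>auto simp: row_transpose\<close>)
  moreover have "us ! 0 = v"
  proof -
    have "ws ! 0 = v" using hdws ws(3) n by (cases ws) auto
    thus ?thesis using usi[OF n] v1 by simp
  qed
  ultimately show ?thesis using W colW[OF n] by blast
qed

lemma spectral_real:
  fixes A :: "real mat"
  assumes "A \<in> carrier_mat n n" "transpose_mat A = A"
  shows "\<exists>U D. U \<in> carrier_mat n n \<and> D \<in> carrier_mat n n \<and> diagonal_mat D \<and>
    transpose_mat U * U = 1\<^sub>m n \<and> A = U * D * transpose_mat U"
  using assms
proof (induction n arbitrary: A)
  case 0
  show ?case
    by (rule exI[of _ "1\<^sub>m 0"], rule exI[of _ "0\<^sub>m 0 0"])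
       (use 0 in \<open>auto simp: diagonal_mat_def intro!: eq_matI\<close>)
next
  case (Suc m A)
  note A = Suc.prems(1) and sym = Suc.prems(2)
  let ?n = "Suc m"
  obtain e where "eigenvalue A e" using real_sym_eigenvalue[OF A _ sym] by auto
  then obtain w where "eigenvector A w e" unfolding eigenvalue_def by blast
  hence w: "w \<in> carrier_vec ?n" "w \<noteq> 0\<^sub>v ?n" "A *\<^sub>v w = e \<cdot>\<^sub>v w"
    unfolding eigenvector_def using A by auto
  have ww: "w \<bullet> w > 0"
  proof -
    obtain i where i: "i < ?n" "w $ i \<noteq> 0"
    proof -
      { assume "\<forall>i<?n. w $ i = 0"
        hence "w = 0\<^sub>v ?n" using w(1) by (intro eq_vecI) auto }
      thus ?thesis using w(2) that by blast
    qed
    have "w \<bullet> w = (\<Sum>j<?n. (w $ j)^2)" using w(1)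
      by (auto simp: scalar_prod_def power2_eq_square lessThan_atLeast0)
    also have "\<dots> > 0" by (rule sum_pos2[of _ i], use i in auto)
    finally show ?thesis .
  qed
  define v where "v = (1 / sqrt (w \<bullet> w)) \<cdot>\<^sub>v w"
  have v: "v \<in> carrier_vec ?n" unfolding v_def using w by simp
  have v1: "v \<bullet> v = 1" unfolding v_def using w(1) ww
    by (simp add: field_simps real_sqrt_mult[symmetric])
  have Av: "A *\<^sub>v v = e \<cdot>\<^sub>v v" unfolding v_def using w A
    by (simp add: mult_mat_vec smult_smult_assoc mult.commute)
  obtain W where W: "W \<in> carrier_mat ?n ?n" and WW: "transpose_mat W * W = 1\<^sub>m ?n"
    and colW: "col W 0 = v" using orthonormal_completion[OF v v1] by blast
  have WT: "transpose_mat W \<in> carrier_mat ?n ?n" using W by simp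
  have WW': "W * transpose_mat W = 1\<^sub>m ?n"
    using mat_mult_left_right_inverse[OF WT W WW] .
  define A' where "A' = transpose_mat W * A * W"
  have A': "A' \<in> carrier_mat ?n ?n" unfolding A'_def using W A by auto
  have symA': "transpose_mat A' = A'"
  proof -
    have "transpose_mat A' = transpose_mat W * transpose_mat (transpose_mat W * A)"
      unfolding A'_def by (rule transpose_mult[of _ ?n ?n]) (use W A in auto)
    also have "transpose_mat (transpose_mat W * A) = A * W"
      by (subst transpose_mult[of _ ?n ?n]) (use W A sym in auto)
    also have "transpose_mat W * (A * W) = A'"
      unfolding A'_def using W A by (simp add: assoc_mult_mat[of _ ?n ?n _ ?n _ ?n])
    finally show ?thesis .
  qed
  have colA': "col A' 0 = e \<cdot>\<^sub>v unit_vec ?n 0"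
  proof -
    have "col A' 0 = (transpose_mat W * A) *\<^sub>v col W 0"
      unfolding A'_def by (rule col_mult2[of _ ?n ?n _ ?n]) (use W A in auto)
    also have "\<dots> = transpose_mat W *\<^sub>v (A *\<^sub>v col W 0)"
      by (rule assoc_mult_mat_vec[of _ ?n ?n _ ?n]) (use W A v colW in auto)
    also have "\<dots> = e \<cdot>\<^sub>v (transpose_mat W *\<^sub>v col W 0)"
      unfolding colW Av using WT v by (simp add: mult_mat_vec)
    also have "transpose_mat W *\<^sub>v col W 0 = col (transpose_mat W * W) 0"
      by (rule col_mult2[symmetric, of _ ?n ?n _ ?n]) (use W WT in auto)
    also have "\<dots> = unit_vec ?n 0" unfolding WW by simp
    finally show ?thesis .
  qed
  have A'i0: "A' $$ (i, 0) = (if i = 0 then e else 0)" if "i < ?n" for i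
    using arg_cong[OF colA', of "\<lambda>x. x $ i"] that A' by (auto simp: unit_vec_def)
  have A'0j: "A' $$ (0, j) = (if j = 0 then e else 0)" if "j < ?n" for j
  proof -
    have "A' $$ (0, j) = transpose_mat A' $$ (0, j)" using symA' by simp
    also have "\<dots> = A' $$ (j, 0)" using A' that by simp
    finally show ?thesis using A'i0[OF that] by simp
  qed
  define A3 where "A3 = mat m m (\<lambda>(i,j). A' $$ (Suc i, Suc j))"
  have A3: "A3 \<in> carrier_mat m m" unfolding A3_def by simp
  have symA3: "transpose_mat A3 = A3"
  proof (rule eq_matI)
    fix i j assume ij: "i < dim_row A3" "j < dim_col A3"
    have "A' $$ (Suc j, Suc i) = transpose_mat A' $$ (Suc i, Suc j)"
      using ij A' A3 by simp
    thus "transpose_mat A3 $$ (i, j) = A3 $$ (i, j)"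
      using ij A3 symA' by (simp add: A3_def)
  qed (use A3 in auto)
  let ?E = "mat 1 1 (\<lambda>_. e) :: real mat"
  have A'blk: "A' = four_block_mat ?E (0\<^sub>m 1 m) (0\<^sub>m m 1) A3"
  proof (rule eq_matI)
    fix i j assume ij: "i < dim_row (four_block_mat ?E (0\<^sub>m 1 m) (0\<^sub>m m 1) A3)"
      "j < dim_col (four_block_mat ?E (0\<^sub>m 1 m) (0\<^sub>m m 1) A3)"
    hence ij': "i < ?n" "j < ?n" using A3 by auto
    show "A' $$ (i, j) = four_block_mat ?E (0\<^sub>m 1 m) (0\<^sub>m m 1) A3 $$ (i, j)"
      using ij' A3 A'i0[OF ij'(1)] A'0j[OF ij'(2)]
      by (cases i; cases j) (auto simp: A3_def)
  qed (use A' A3 in auto)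
  obtain U3 D3 where U3: "U3 \<in> carrier_mat m m" and D3: "D3 \<in> carrier_mat m m"
    and diag3: "diagonal_mat D3" and UU3: "transpose_mat U3 * U3 = 1\<^sub>m m"
    and A3eq: "A3 = U3 * D3 * transpose_mat U3"
    using Suc.IH[OF A3 symA3] by blast
  define B where "B = four_block_mat (1\<^sub>m 1) (0\<^sub>m 1 m) (0\<^sub>m m 1) U3"
  define D where "D = four_block_mat ?E (0\<^sub>m 1 m) (0\<^sub>m m 1) D3"
  define U where "U = W * B"
  have B: "B \<in> carrier_mat ?n ?n" unfolding B_def using U3 by auto
  have BT: "transpose_mat B = four_block_mat (1\<^sub>m 1) (0\<^sub>m 1 m) (0\<^sub>m m 1) (transpose_mat U3)"
    unfolding B_def using U3 by (subst transpose_four_block_mat) auto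
  have D: "D \<in> carrier_mat ?n ?n" unfolding D_def using D3 by auto
  have U: "U \<in> carrier_mat ?n ?n" unfolding U_def using W B by auto
  have BB: "transpose_mat B * B = 1\<^sub>m ?n"
    unfolding BT unfolding B_def using U3
    by (subst mult_four_block_mat[of _ 1 1 _ m _ m _ _ 1 _ m]) (auto simp: UU3)
  have BDB: "B * D * transpose_mat B = A'"
  proof -
    have "B * D = four_block_mat ?E (0\<^sub>m 1 m) (0\<^sub>m m 1) (U3 * D3)"
      unfolding B_def D_def using U3 D3
      by (subst mult_four_block_mat[of _ 1 1 _ m _ m _ _ 1 _ m]) auto
    also have "\<dots> * transpose_mat B = four_block_mat ?E (0\<^sub>m 1 m) (0\<^sub>m m 1) (U3 * D3 * transpose_mat U3)"
      unfolding BT using U3 D3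
      by (subst mult_four_block_mat[of _ 1 1 _ m _ m _ _ 1 _ m]) auto
    finally show ?thesis unfolding A3eq[symmetric] A'blk .
  qed
  have "transpose_mat U * U = 1\<^sub>m ?n"
  proof -
    have "transpose_mat U * U = transpose_mat B * (transpose_mat W * W) * B"
      unfolding U_def using W B
      by (simp add: transpose_mult[of _ ?n ?n] assoc_mult_mat[of _ ?n ?n _ ?n _ ?n])
    also have "\<dots> = 1\<^sub>m ?n" unfolding WW using B BB by simp
    finally show ?thesis .
  qed
  moreover have "A = U * D * transpose_mat U"
  proof -
    have "U * D * transpose_mat U = W * (B * D * transpose_mat B) * transpose_mat W"
      unfolding U_def using W B D
      by (simp add: transpose_mult[of _ ?n ?n] assoc_mult_mat[of _ ?n ?n _ ?n _ ?n])
    also have "\<dots> = (W * transpose_mat W) * A * (W * transpose_mat W)"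
      unfolding BDB A'_def using W A
      by (simp add: assoc_mult_mat[of _ ?n ?n _ ?n _ ?n])
    also have "\<dots> = A" unfolding WW' using A by simp
    finally show ?thesis by simp
  qed
  moreover have "diagonal_mat D"
    unfolding diagonal_mat_def D_def using D3 diag3
    by (auto simp: diagonal_mat_def)
  ultimately show ?case using U D by blast
qed

lemma mult_mat_entry:
  assumes "A \<in> carrier_mat n m" "B \<in> carrier_mat m p" "i < n" "j < p"
  shows "(A * B) $$ (i, j) = (\<Sum>l<m. A $$ (i, l) * B $$ (l, j))"
  using assms by (auto simp: scalar_prod_def lessThan_atLeast0 intro!: sum.cong)

lemma mult_diag_entry:
  assumes U: "U \<in> carrier_mat n n" and D: "D \<in> carrier_mat n n" and dD: "diagonal_mat D"
    and x: "x < n" and j: "j < n"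
  shows "(U * D) $$ (x, j) = U $$ (x, j) * D $$ (j, j)"
proof -
  have "(U * D) $$ (x, j) = (\<Sum>l<n. U $$ (x, l) * D $$ (l, j))"
    by (rule mult_mat_entry[OF U D x j])
  also have "\<dots> = (\<Sum>l<n. if l = j then U $$ (x, j) * D $$ (j, j) else 0)"
    using dD D j unfolding diagonal_mat_def by (intro sum.cong refl) auto
  also have "\<dots> = U $$ (x, j) * D $$ (j, j)" using j by simp
  finally show ?thesis .
qed

lemma spectral_entries:
  fixes A :: "real mat"
  assumes A: "A \<in> carrier_mat n n" "transpose_mat A = A"
  shows "\<exists>U D. U \<in> carrier_mat n n \<and> D \<in> carrier_mat n n \<and> diagonal_mat D \<and>
    transpose_mat U * U = 1\<^sub>m n \<and> U * transpose_mat U = 1\<^sub>m n \<and> A = U * D * transpose_mat U \<and>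
    (\<forall>x<n. \<forall>y<n. A $$ (x, y) = (\<Sum>j<n. U $$ (x, j) * D $$ (j, j) * U $$ (y, j))) \<and>
    (\<forall>i<n. D $$ (i, i) = (\<Sum>x<n. \<Sum>y<n. U $$ (x, i) * A $$ (x, y) * U $$ (y, i)))"
proof -
  obtain U D where U: "U \<in> carrier_mat n n" and D: "D \<in> carrier_mat n n" and dD: "diagonal_mat D"
    and UU: "transpose_mat U * U = 1\<^sub>m n" and AU: "A = U * D * transpose_mat U"
    using spectral_real[OF A] by blast
  have UT: "transpose_mat U \<in> carrier_mat n n" using U by simp
  have UU': "U * transpose_mat U = 1\<^sub>m n" using mat_mult_left_right_inverse[OF UT U UU] .
  have e1: "A $$ (x, y) = (\<Sum>j<n. U $$ (x, j) * D $$ (j, j) * U $$ (y, j))" if "x < n" "y < n" for x y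
  proof -
    have "A $$ (x, y) = (\<Sum>j<n. (U * D) $$ (x, j) * transpose_mat U $$ (j, y))"
      unfolding AU using U D UT that by (intro mult_mat_entry) auto
    also have "\<dots> = (\<Sum>j<n. U $$ (x, j) * D $$ (j, j) * U $$ (y, j))"
      using mult_diag_entry[OF U D dD] that U by (intro sum.cong refl) auto
    finally show ?thesis .
  qed
  have DA: "D = transpose_mat U * A * U"
  proof -
    have "transpose_mat U * A * U = (transpose_mat U * U) * D * (transpose_mat U * U)"
      unfolding AU using U D UT by (simp add: assoc_mult_mat[of _ n n _ n _ n])
    thus ?thesis unfolding UU using D by simp
  qed
  have e2: "D $$ (i, i) = (\<Sum>x<n. \<Sum>y<n. U $$ (x, i) * A $$ (x, y) * U $$ (y, i))" if "i < n" for i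
  proof -
    have "D $$ (i, i) = (\<Sum>y<n. (transpose_mat U * A) $$ (i, y) * U $$ (y, i))"
      unfolding DA using UT A U that by (intro mult_mat_entry) auto
    also have "\<dots> = (\<Sum>y<n. (\<Sum>x<n. U $$ (x, i) * A $$ (x, y)) * U $$ (y, i))"
      using UT A U that by (intro sum.cong refl, subst mult_mat_entry[of _ n n _ n]) auto
    also have "\<dots> = (\<Sum>y<n. \<Sum>x<n. U $$ (x, i) * A $$ (x, y) * U $$ (y, i))"
      by (simp add: sum_distrib_right)
    also have "\<dots> = (\<Sum>x<n. \<Sum>y<n. U $$ (x, i) * A $$ (x, y) * U $$ (y, i))"
      by (rule sum.swap)
    finally show ?thesis .
  qed
  show ?thesis using U D dD UU UU' AU e1 e2 by blast
qed

lemma sum_singletons_mset: "(\<Sum>a\<leftarrow>ds. {#a#}) = mset ds"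
  by (induction ds) auto

lemma S_k_frame:
  fixes A :: "real mat"
  assumes A: "A \<in> carrier_mat n n" "transpose_mat A = A" and k: "k \<le> n"
  shows "\<exists>U I. U \<in> carrier_mat n n \<and> transpose_mat U * U = 1\<^sub>m n \<and> U * transpose_mat U = 1\<^sub>m n \<and>
     I \<subseteq> {..<n} \<and> card I = k \<and>
     S_k k A = (\<Sum>i\<in>I. \<Sum>x<n. \<Sum>y<n. U $$ (x, i) * A $$ (x, y) * U $$ (y, i))"
proof -
  obtain U D where U: "U \<in> carrier_mat n n" and D: "D \<in> carrier_mat n n" and dD: "diagonal_mat D"
    and UU: "transpose_mat U * U = 1\<^sub>m n" and UU': "U * transpose_mat U = 1\<^sub>m n"
    and AU: "A = U * D * transpose_mat U"
    and e2: "\<forall>i<n. D $$ (i, i) = (\<Sum>x<n. \<Sum>y<n. U $$ (x, i) * A $$ (x, y) * U $$ (y, i))"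
    using spectral_entries[OF A] by blast
  have UT: "transpose_mat U \<in> carrier_mat n n" using U by simp
  have "similar_mat_wit A D U (transpose_mat U)"
    unfolding similar_mat_wit_def Let_def using A U D UU UU' AU by auto
  hence "similar_mat A D" unfolding similar_mat_def by blast
  hence "char_poly A = char_poly D" by (rule char_poly_similar)
  also have "char_poly D = (\<Prod>a\<leftarrow>diag_mat D. [:- a, 1:])"
    by (rule char_poly_upper_triangular[OF D])
       (use dD D in \<open>auto simp: upper_triangular_def diagonal_mat_def\<close>)
  finally have cp: "char_poly A = (\<Prod>a\<leftarrow>diag_mat D. [:- a, 1:])" .
  define ds where "ds = diag_mat D"
  have lds: "length ds = n" unfolding ds_def diag_mat_def using D by simp
  have dsi: "ds ! i = D $$ (i, i)" if "i < n" for i unfolding ds_def diag_mat_def using D that by simp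
  have "proots (char_poly A) = (\<Sum>p\<leftarrow>map (\<lambda>a. [:- a, 1:]) ds. proots p)"
    unfolding cp ds_def by (subst proots_prod_list[symmetric]) (auto simp: comp_def)
  also have "\<dots> = (\<Sum>a\<leftarrow>ds. {#a#})" by (simp add: comp_def)
  also have "\<dots> = mset ds" by (rule sum_singletons_mset)
  finally have pr: "proots (char_poly A) = mset ds" .
  have "mset (eigenvalues_desc A) = mset ds"
    unfolding eigenvalues_desc_def pr by simp
  then obtain p where p: "p permutes {..<length ds}" "permute_list p ds = eigenvalues_desc A"
    by (rule mset_eq_permutation)
  have lev: "length (eigenvalues_desc A) = n" using p(2) lds by (metis length_permute_list)
  have evj: "eigenvalues_desc A ! j = ds ! (p j)" if "j < n" for j
    using p lds that by (metis permute_list_nth)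
  have injp: "inj_on p {..<k}" using permutes_inj[OF p(1)] by (simp add: inj_on_def inj_def)
  have sub: "p ` {..<k} \<subseteq> {..<n}"
  proof
    fix i assume "i \<in> p ` {..<k}"
    then obtain j where j: "j < k" "i = p j" by auto
    have "j \<in> {..<length ds}" using j k lds by simp
    hence "p j \<in> {..<length ds}" using p(1) by (simp only: permutes_in_image)
    thus "i \<in> {..<n}" using j lds by simp
  qed
  have "S_k k A = (\<Sum>j<k. eigenvalues_desc A ! j)"
    unfolding S_k_def using k lev by (simp add: sum_list_sum_nth min_def lessThan_atLeast0)
  also have "\<dots> = (\<Sum>j<k. ds ! (p j))" using evj k by (intro sum.cong refl) auto
  also have "\<dots> = (\<Sum>i\<in>p ` {..<k}. ds ! i)" by (rule sum.reindex[OF injp, symmetric, unfolded comp_def])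
  also have "\<dots> = (\<Sum>i\<in>p ` {..<k}. \<Sum>x<n. \<Sum>y<n. U $$ (x, i) * A $$ (x, y) * U $$ (y, i))"
  proof (intro sum.cong refl)
    fix i assume "i \<in> p ` {..<k}"
    hence i: "i < n" using sub by auto
    show "ds ! i = (\<Sum>x<n. \<Sum>y<n. U $$ (x, i) * A $$ (x, y) * U $$ (y, i))"
      using dsi[OF i] e2 i by simp
  qed
  finally have Sk: "S_k k A = (\<Sum>i\<in>p ` {..<k}. \<Sum>x<n. \<Sum>y<n. U $$ (x, i) * A $$ (x, y) * U $$ (y, i))" .
  have "card (p ` {..<k}) = k" using card_image[OF injp] by simp
  thus ?thesis using U UU UU' Sk sub by blast
qed

definition gpath :: "(nat \<Rightarrow> nat \<Rightarrow> bool) \<Rightarrow> nat set \<Rightarrow> nat list \<Rightarrow> bool" where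
  "gpath E S vs \<longleftrightarrow> distinct vs \<and> set vs \<subseteq> S \<and> length vs \<ge> 2 \<and>
     (\<forall>i. Suc i < length vs \<longrightarrow> E (vs ! i) (vs ! Suc i))"

lemma leaf_exists:
  assumes sym: "\<forall>u v. E u v \<longrightarrow> E v u" and irr: "\<forall>u. \<not> E u u" and acyc: "acyclic_graph E"
    and fin: "finite S" and xy: "x \<in> S" "y \<in> S" "E x y"
  shows "\<exists>l\<in>S. \<exists>p\<in>S. E l p \<and> (\<forall>q\<in>S. E l q \<longrightarrow> q = p)"
proof -
  let ?P = "\<lambda>L. \<exists>vs. gpath E S vs \<and> length vs = L"
  have xy': "x \<noteq> y" using xy irr by auto
  have P2: "?P 2" by (rule exI[of _ "[x, y]"]) (use xy xy' in \<open>auto simp: gpath_def nth_Cons'\<close>)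
  have bnd: "\<forall>L. ?P L \<longrightarrow> L \<le> card S"
  proof (intro allI impI)
    fix L assume "?P L"
    then obtain vs where "gpath E S vs" "length vs = L" by blast
    thus "L \<le> card S" unfolding gpath_def using fin
      by (metis card_mono distinct_card)
  qed
  obtain L where PL: "?P L" and maxL: "\<forall>L'. ?P L' \<longrightarrow> L' \<le> L"
    using Nat.ex_has_greatest_nat[of ?P 2 "card S", OF P2 bnd] by blast
  obtain vs where vs: "gpath E S vs" and lvs: "length vs = L" using PL by blast
  have dist: "distinct vs" and setS: "set vs \<subseteq> S" and L2: "L \<ge> 2"
    and adj: "\<And>i. Suc i < L \<Longrightarrow> E (vs ! i) (vs ! Suc i)"
    using vs lvs unfolding gpath_def by auto
  define w where "w = vs ! (L - 1)"
  define p where "p = vs ! (L - 2)"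
  have wS: "w \<in> S" unfolding w_def using setS L2 lvs nth_mem[of "L - 1" vs] by auto
  have pS: "p \<in> S" unfolding p_def using setS L2 lvs nth_mem[of "L - 2" vs] by auto
  have Epw: "E p w"
  proof -
    have "Suc (L - 2) < L" "Suc (L - 2) = L - 1" using L2 by auto
    thus ?thesis unfolding p_def w_def using adj[of "L - 2"] by simp
  qed
  have Ewp: "E w p" using Epw sym by blast
  have uniq: "q = p" if qS: "q \<in> S" and Ewq: "E w q" for q
  proof (cases "q \<in> set vs")
    case False
    have "gpath E S (vs @ [q])" unfolding gpath_def
    proof (intro conjI allI impI)
      show "distinct (vs @ [q])" using dist False by simp
      show "set (vs @ [q]) \<subseteq> S" using setS qS by simp
      show "2 \<le> length (vs @ [q])" using L2 lvs by simp
      fix i assume i: "Suc i < length (vs @ [q])"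
      show "E ((vs @ [q]) ! i) ((vs @ [q]) ! Suc i)"
      proof (cases "Suc i < L")
        case True thus ?thesis using adj[OF True] lvs by (simp add: nth_append)
      next
        case False
        hence "i = L - 1" using i lvs by simp
        thus ?thesis using Ewq lvs L2 by (simp add: nth_append w_def)
      qed
    qed
    hence "?P (Suc L)" using lvs by (intro exI[of _ "vs @ [q]"]) simp
    thus ?thesis using maxL by fastforce
  next
    case True
    then obtain i where i: "i < L" and qi: "q = vs ! i" using lvs by (auto simp: set_conv_nth)
    consider "i = L - 1" | "i = L - 2" | "i < L - 2" using i by linarith
    thus ?thesis
    proof cases
      case 1 thus ?thesis using Ewq irr qi w_def by auto
    next
      case 2 thus ?thesis using qi p_def by simp
    next
      case 3
      define cs where "cs = drop i vs"
      have lcs: "length cs = L - i" unfolding cs_def using lvs by simp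
      have "is_cycle E cs" unfolding is_cycle_def
      proof (intro conjI allI impI)
        show "3 \<le> length cs" using lcs 3 by simp
        show "distinct cs" unfolding cs_def using dist by simp
        fix j assume j: "Suc j < length cs"
        show "E (cs ! j) (cs ! Suc j)" unfolding cs_def using adj[of "i + j"] j lcs i lvs by simp
      next
        have "last cs = w" unfolding cs_def w_def using i lvs by (simp add: last_conv_nth)
        moreover have "hd cs = q" unfolding cs_def qi using i lvs by (simp add: hd_drop_conv_nth)
        ultimately show "E (last cs) (hd cs)" using Ewq by simp
      qed
      thus ?thesis using acyc unfolding acyclic_graph_def by blast
    qed
  qed
  show ?thesis using wS pS Ewp uniq by blast
qed

context
  fixes E :: "nat \<Rightarrow> nat \<Rightarrow> bool"
  assumes sym: "\<forall>u v. E u v \<longrightarrow> E v u" and irr: "\<forall>u. \<not> E u u" and acyc: "acyclic_graph E"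
begin

lemma leaf_obtain:
  assumes "finite S" "x \<in> S" "y \<in> S" "E x y"
  obtains l p where "l \<in> S" "p \<in> S" "E l p" "\<And>q. q \<in> S \<Longrightarrow> E l q \<Longrightarrow> q = p" "l \<noteq> p"
  using leaf_exists[OF sym irr acyc assms] irr by blast

lemma forest_edges:
  assumes "finite S" "S \<noteq> {}"
  shows "card {(u, v). u \<in> S \<and> v \<in> S \<and> E u v} + 2 \<le> 2 * card S"
  using assms
proof (induction "card S" arbitrary: S rule: less_induct)
  case less
  show ?case
  proof (cases "\<exists>x\<in>S. \<exists>y\<in>S. E x y")
    case False
    hence e: "{(u, v). u \<in> S \<and> v \<in> S \<and> E u v} = {}" by auto
    have "card S \<ge> 1" using less.prems by (simp add: Suc_leI card_gt_0_iff)
    thus ?thesis unfolding e by simp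
  next
    case True
    then obtain x y where xy: "x \<in> S" "y \<in> S" "E x y" by blast
    obtain l p where lp: "l \<in> S" "p \<in> S" "E l p" "\<And>q. q \<in> S \<Longrightarrow> E l q \<Longrightarrow> q = p" "l \<noteq> p"
      using leaf_obtain[OF less.prems(1) xy] by blast
    define S' where "S' = S - {l}"
    have fS': "finite S'" "S' \<noteq> {}" using less.prems lp(1,2,3,5) unfolding S'_def by auto
    have cS: "card S = Suc (card S')" unfolding S'_def using less.prems lp(1)
      by (simp add: card_gt_0_iff)
    have IH: "card {(u, v). u \<in> S' \<and> v \<in> S' \<and> E u v} + 2 \<le> 2 * card S'"
      using less.hyps[of S'] cS fS' by simp
    let ?T = "{(u, v). u \<in> S' \<and> v \<in> S' \<and> E u v}"
    have eq: "{(u, v). u \<in> S \<and> v \<in> S \<and> E u v} = insert (l, p) (insert (p, l) ?T)"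
    proof (rule equalityI; rule subsetI)
      fix z assume "z \<in> {(u, v). u \<in> S \<and> v \<in> S \<and> E u v}"
      then obtain u v where z: "z = (u, v)" "u \<in> S" "v \<in> S" "E u v" by blast
      show "z \<in> insert (l, p) (insert (p, l) ?T)"
      proof (cases "u = l \<or> v = l")
        case True
        show ?thesis
        proof (cases "u = l")
          case True
          hence "v = p" using lp(4)[of v] z by simp
          thus ?thesis using True z by simp
        next
          case False
          hence "v = l" using \<open>u = l \<or> v = l\<close> by simp
          hence "E l u" using z sym[rule_format, of u v] by simp
          hence "u = p" using lp(4)[of u] z by simp
          thus ?thesis using \<open>v = l\<close> z by simp
        qed
      next
        case False thus ?thesis using z unfolding S'_def by auto
      qed
    next
      fix z assume "z \<in> insert (l, p) (insert (p, l) ?T)"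
      moreover have "E p l" using lp(3) sym by blast
      ultimately show "z \<in> {(u, v). u \<in> S \<and> v \<in> S \<and> E u v}" using lp(1,2,3,5) unfolding S'_def by auto
    qed
    have finT: "finite ?T" by (rule finite_subset[of _ "S' \<times> S'"]) (use fS'(1) in auto)
    have "(l, p) \<notin> ?T" "(p, l) \<notin> ?T" "(l, p) \<noteq> (p, l)" using lp(1,2,3,5) unfolding S'_def by auto
    hence "card {(u, v). u \<in> S \<and> v \<in> S \<and> E u v} = card ?T + 2"
      unfolding eq using finT by simp
    thus ?thesis using IH cS by simp
  qed
qed

lemma forest_bipartite:
  assumes "finite S"
  shows "\<exists>X. \<forall>u\<in>S. \<forall>v\<in>S. E u v \<longrightarrow> (u \<in> X \<longleftrightarrow> v \<notin> X)"
  using assms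
proof (induction "card S" arbitrary: S rule: less_induct)
  case less
  show ?case
  proof (cases "\<exists>x\<in>S. \<exists>y\<in>S. E x y")
    case False thus ?thesis by blast
  next
    case True
    then obtain x y where xy: "x \<in> S" "y \<in> S" "E x y" by blast
    obtain l p where lp: "l \<in> S" "p \<in> S" "E l p" "\<And>q. q \<in> S \<Longrightarrow> E l q \<Longrightarrow> q = p" "l \<noteq> p"
      using leaf_obtain[OF less.prems(1) xy] by blast
    define S' where "S' = S - {l}"
    have "card S' < card S" unfolding S'_def using less.prems lp(1) by (meson card_Diff1_less)
    then obtain X' where X': "\<forall>u\<in>S'. \<forall>v\<in>S'. E u v \<longrightarrow> (u \<in> X' \<longleftrightarrow> v \<notin> X')"
      using less.hyps[of S'] less.prems unfolding S'_def by auto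
    define X where "X = (if p \<in> X' then X' - {l} else insert l X')"
    have "\<forall>u\<in>S. \<forall>v\<in>S. E u v \<longrightarrow> (u \<in> X \<longleftrightarrow> v \<notin> X)"
    proof (intro ballI impI)
      fix u v assume uv: "u \<in> S" "v \<in> S" "E u v"
      show "u \<in> X \<longleftrightarrow> v \<notin> X"
      proof (cases "u = l \<or> v = l")
        case True
        then consider "u = l" "v = p" | "v = l" "u = p"
          using lp(4) uv sym by blast
        thus ?thesis using lp(5) unfolding X_def by cases auto
      next
        case False
        hence "u \<in> S'" "v \<in> S'" using uv unfolding S'_def by auto
        thus ?thesis using X' uv False unfolding X_def by auto
      qed
    qed
    thus ?thesis by blast
  qed
qed

lemma forest_cover:
  assumes "finite S"
  shows "\<exists>C M. C \<subseteq> S \<and> (\<forall>u\<in>S. \<forall>v\<in>S. E u v \<longrightarrow> u \<in> C \<or> v \<in> C) \<and>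
    M \<subseteq> {{u, v} | u v. u \<in> S \<and> v \<in> S \<and> E u v} \<and> pairwise disjnt M \<and> finite M \<and> card C \<le> card M"
  using assms
proof (induction "card S" arbitrary: S rule: less_induct)
  case less
  show ?case
  proof (cases "\<exists>x\<in>S. \<exists>y\<in>S. E x y")
    case False
    thus ?thesis by (intro exI[of _ "{}"]) auto
  next
    case True
    then obtain x y where xy: "x \<in> S" "y \<in> S" "E x y" by blast
    obtain l p where lp: "l \<in> S" "p \<in> S" "E l p" "\<And>q. q \<in> S \<Longrightarrow> E l q \<Longrightarrow> q = p" "l \<noteq> p"
      using leaf_obtain[OF less.prems(1) xy] by blast
    define S' where "S' = S - {l, p}"
    have "card S' < card S" unfolding S'_def using less.prems lp(1)
      by (intro psubset_card_mono) auto
    moreover have "finite S'" unfolding S'_def using less.prems by simp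
    ultimately have IH: "\<exists>C M. C \<subseteq> S' \<and> (\<forall>u\<in>S'. \<forall>v\<in>S'. E u v \<longrightarrow> u \<in> C \<or> v \<in> C) \<and>
    M \<subseteq> {{u, v} | u v. u \<in> S' \<and> v \<in> S' \<and> E u v} \<and> pairwise disjnt M \<and> finite M \<and> card C \<le> card M"
      by (rule less.hyps)
    obtain C' M' where C': "C' \<subseteq> S'" "\<forall>u\<in>S'. \<forall>v\<in>S'. E u v \<longrightarrow> u \<in> C' \<or> v \<in> C'"
      and M': "M' \<subseteq> {{u, v} | u v. u \<in> S' \<and> v \<in> S' \<and> E u v}" "pairwise disjnt M'" "finite M'"
      and cC': "card C' \<le> card M'"
      using IH by blast
    define C where "C = insert p C'"
    define M where "M = insert {l, p} M'"
    have "C \<subseteq> S" using C' lp(2) unfolding C_def S'_def by auto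
    moreover have "\<forall>u\<in>S. \<forall>v\<in>S. E u v \<longrightarrow> u \<in> C \<or> v \<in> C"
    proof (intro ballI impI)
      fix u v assume uv: "u \<in> S" "v \<in> S" "E u v"
      show "u \<in> C \<or> v \<in> C"
      proof (cases "u \<in> {l, p} \<or> v \<in> {l, p}")
        case True
        thus ?thesis using lp(4) uv sym unfolding C_def by blast
      next
        case False
        thus ?thesis using C'(2) uv unfolding C_def S'_def by auto
      qed
    qed
    moreover have "M \<subseteq> {{u, v} | u v. u \<in> S \<and> v \<in> S \<and> E u v}"
      using M'(1) lp(1,2,3) unfolding M_def S'_def by blast
    moreover have "pairwise disjnt M"
    proof -
      have d1: "disjnt {l, p} e" if "e \<in> M'" for e
        using M'(1) that unfolding S'_def disjnt_def by blast
      have d2: "disjnt e {l, p}" if "e \<in> M'" for e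
        using d1[OF that] by (rule disjnt_sym)
      show ?thesis using M'(2) d1 d2 unfolding M_def pairwise_insert by blast
    qed
    moreover have "finite M" using M'(3) unfolding M_def by simp
    moreover have "card C \<le> card M"
    proof -
      have "{l, p} \<notin> M'" using M'(1) unfolding S'_def by blast
      hence "card M = Suc (card M')" unfolding M_def using M'(3) by simp
      moreover have "finite C'" using C'(1) less.prems finite_subset unfolding S'_def by blast
      hence "card C \<le> Suc (card C')" unfolding C_def by (simp add: card_insert_if)
      ultimately show ?thesis using cC' by simp
    qed
    ultimately show ?thesis by blast
  qed
qed

end

lemma cauchy_schwarz_sum:
  fixes f g :: "'a \<Rightarrow> real"
  assumes "finite A"
  shows "(\<Sum>a\<in>A. f a * g a)^2 \<le> (\<Sum>a\<in>A. (f a)^2) * (\<Sum>a\<in>A. (g a)^2)"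
proof -
  let ?F = "\<Sum>a\<in>A. (f a)^2" and ?G = "\<Sum>a\<in>A. (g a)^2" and ?H = "\<Sum>a\<in>A. f a * g a"
  have "0 \<le> (\<Sum>a\<in>A. \<Sum>b\<in>A. (f a * g b - f b * g a)^2)" by (intro sum_nonneg) auto
  also have "\<dots> = (\<Sum>a\<in>A. \<Sum>b\<in>A. (f a)^2 * (g b)^2 + (f b)^2 * (g a)^2 - 2 * (f a * g a) * (f b * g b))"
    by (intro sum.cong refl) (simp add: power2_eq_square algebra_simps)
  also have "\<dots> = (\<Sum>a\<in>A. \<Sum>b\<in>A. (f a)^2 * (g b)^2) + (\<Sum>a\<in>A. \<Sum>b\<in>A. (f b)^2 * (g a)^2)
      - 2 * (\<Sum>a\<in>A. \<Sum>b\<in>A. (f a * g a) * (f b * g b))"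
    by (simp add: sum_subtractf sum.distrib sum_distrib_left mult.assoc)
  also have "(\<Sum>a\<in>A. \<Sum>b\<in>A. (f a)^2 * (g b)^2) = ?F * ?G"
    by (simp add: sum_product)
  also have "(\<Sum>a\<in>A. \<Sum>b\<in>A. (f b)^2 * (g a)^2) = ?F * ?G"
    by (subst sum.swap) (simp add: sum_product)
  also have "(\<Sum>a\<in>A. \<Sum>b\<in>A. (f a * g a) * (f b * g b)) = ?H^2"
    by (simp add: sum_product power2_eq_square)
  finally show ?thesis by simp
qed

lemma cauchy_schwarz_card:
  fixes f :: "'a \<Rightarrow> real"
  assumes "finite A"
  shows "(\<Sum>a\<in>A. f a)^2 \<le> real (card A) * (\<Sum>a\<in>A. (f a)^2)"
  using cauchy_schwarz_sum[OF assms, of "\<lambda>_. 1" f] by simp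

lemma orient_sum:
  fixes f :: "nat \<times> nat \<Rightarrow> real" and h :: "nat \<times> nat \<Rightarrow> bool"
  assumes fin: "finite Pr" and sw: "\<And>x y. (x, y) \<in> Pr \<Longrightarrow> (y, x) \<in> Pr"
    and hx: "\<And>x y. (x, y) \<in> Pr \<Longrightarrow> h (y, x) \<longleftrightarrow> \<not> h (x, y)"
    and fs: "\<And>x y. (x, y) \<in> Pr \<Longrightarrow> f (y, x) = f (x, y)"
  shows "sum f Pr = 2 * sum f {p \<in> Pr. h p}" "card Pr = 2 * card {p \<in> Pr. h p}"
proof -
  let ?H = "{p \<in> Pr. h p}" and ?H' = "{p \<in> Pr. \<not> h p}"
  have split: "Pr = ?H \<union> ?H'" by auto
  have disj: "?H \<inter> ?H' = {}" by auto
  have fH: "finite ?H" "finite ?H'" using fin by auto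
  have img: "?H' = prod.swap ` ?H"
  proof (rule equalityI; rule subsetI)
    fix p assume p: "p \<in> ?H'"
    obtain x y where xy: "p = (x, y)" by (cases p)
    have "(y, x) \<in> ?H" using p xy sw hx by auto
    thus "p \<in> prod.swap ` ?H" using xy by force
  next
    fix p assume "p \<in> prod.swap ` ?H"
    then obtain x y where xy: "p = (y, x)" "(x, y) \<in> ?H" by auto
    thus "p \<in> ?H'" using sw hx by auto
  qed
  have inj: "inj_on prod.swap ?H" by (rule inj_onI) auto
  have "sum f ?H' = sum (f \<circ> prod.swap) ?H" unfolding img by (rule sum.reindex[OF inj])
  also have "\<dots> = sum f ?H" by (intro sum.cong refl) (use fs in auto)
  finally have s': "sum f ?H' = sum f ?H" .
  have "card ?H' = card ?H" unfolding img by (rule card_image[OF inj])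
  moreover have "sum f Pr = sum f ?H + sum f ?H'"
    by (subst split, rule sum.union_disjoint) (use fH disj in auto)
  moreover have "card Pr = card ?H + card ?H'"
    by (subst split, rule card_Un_disjoint) (use fH disj in auto)
  ultimately show "sum f Pr = 2 * sum f ?H" "card Pr = 2 * card ?H" using s' by auto
qed

lemma double_to_pairs:
  fixes n :: nat and f :: "nat \<Rightarrow> nat \<Rightarrow> real"
  shows "(\<Sum>x<n. \<Sum>y<n. if E x y then f x y else 0) = (\<Sum>p\<in>{(x, y). x < n \<and> y < n \<and> E x y}. f (fst p) (snd p))"
proof -
  have "(\<Sum>x<n. \<Sum>y<n. if E x y then f x y else 0) = (\<Sum>x<n. \<Sum>y\<in>{y. y < n \<and> E x y}. f x y)"
  proof (rule sum.cong[OF refl])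
    fix x
    have "(\<Sum>y<n. if E x y then f x y else 0) = sum (f x) {y \<in> {..<n}. E x y}"
      using sum.inter_filter[of "{..<n}" "f x" "E x"] by simp
    also have "{y \<in> {..<n}. E x y} = {y. y < n \<and> E x y}" by auto
    finally show "(\<Sum>y<n. if E x y then f x y else 0) = (\<Sum>y\<in>{y. y < n \<and> E x y}. f x y)" .
  qed
  also have "\<dots> = (\<Sum>p\<in>(SIGMA x:{..<n}. {y. y < n \<and> E x y}). f (fst p) (snd p))"
    by (subst sum.Sigma) (auto simp: case_prod_beta)
  also have "(SIGMA x:{..<n}. {y. y < n \<and> E x y}) = {(x, y). x < n \<and> y < n \<and> E x y}" by auto
  finally show ?thesis .
qed

lemma sum_delta_mult: "finite A \<Longrightarrow> x \<in> A \<Longrightarrow> (\<Sum>y\<in>A. f y * (if x = y then 1 else (0::real))) = f x"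
  by (simp add: if_distrib[of "\<lambda>t. f _ * t"] sum.delta cong: if_cong)

lemma sq_sum: "(\<Sum>x\<in>A. f x)^2 = (\<Sum>x\<in>A. \<Sum>y\<in>A. f x * (f y :: real))"
  by (simp add: power2_eq_square sum_product)

definition pr :: "real mat \<Rightarrow> nat set \<Rightarrow> nat \<Rightarrow> nat \<Rightarrow> real" where
  "pr U I x y = (\<Sum>i\<in>I. U $$ (x, i) * U $$ (y, i))"

lemma pr_sym: "pr U I x y = pr U I y x"
  unfolding pr_def by (simp add: mult.commute)

context
  fixes n :: nat and U :: "real mat"
  assumes U: "U \<in> carrier_mat n n" and UU: "transpose_mat U * U = 1\<^sub>m n"
    and UU': "U * transpose_mat U = 1\<^sub>m n"
begin

lemma orth_cols: "i < n \<Longrightarrow> j < n \<Longrightarrow> (\<Sum>x<n. U $$ (x, i) * U $$ (x, j)) = (if i = j then 1 else 0)"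
  using mult_mat_entry[of "transpose_mat U" n n U n i j] U UU by simp

lemma orth_rows: "x < n \<Longrightarrow> y < n \<Longrightarrow> (\<Sum>i<n. U $$ (x, i) * U $$ (y, i)) = (if x = y then 1 else 0)"
  using mult_mat_entry[of U n n "transpose_mat U" n x y] U UU' by simp

lemma parseval: "(\<Sum>i<n. (\<Sum>x<n. U $$ (x, i) * z x)^2) = (\<Sum>x<n. (z x)^2)"
proof -
  have "(\<Sum>i<n. (\<Sum>x<n. U $$ (x, i) * z x)^2)
      = (\<Sum>i<n. \<Sum>x<n. \<Sum>y<n. (U $$ (x, i) * z x) * (U $$ (y, i) * z y))"
    by (simp only: sq_sum)
  also have "\<dots> = (\<Sum>x<n. \<Sum>i<n. \<Sum>y<n. (U $$ (x, i) * z x) * (U $$ (y, i) * z y))"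
    by (rule sum.swap)
  also have "\<dots> = (\<Sum>x<n. \<Sum>y<n. \<Sum>i<n. (U $$ (x, i) * z x) * (U $$ (y, i) * z y))"
    by (rule sum.cong[OF refl], rule sum.swap)
  also have "\<dots> = (\<Sum>x<n. \<Sum>y<n. z x * z y * (\<Sum>i<n. U $$ (x, i) * U $$ (y, i)))"
    by (intro sum.cong refl) (simp add: sum_distrib_left mult_ac)
  also have "\<dots> = (\<Sum>x<n. \<Sum>y<n. z x * z y * (if x = y then 1 else 0))"
    by (intro sum.cong refl) (simp add: orth_rows)
  also have "\<dots> = (\<Sum>x<n. (z x)^2)"
    by (intro sum.cong refl) (simp add: sum_delta_mult[of "{..<n}" _ "\<lambda>y. z _ * z y"] power2_eq_square)
  finally show ?thesis .
qed

lemma bessel: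
  assumes I: "I \<subseteq> {..<n}"
  shows "(\<Sum>i\<in>I. (\<Sum>x<n. U $$ (x, i) * z x)^2) \<le> (\<Sum>x<n. (z x)^2)"
proof -
  have "(\<Sum>i\<in>I. (\<Sum>x<n. U $$ (x, i) * z x)^2) \<le> (\<Sum>i<n. (\<Sum>x<n. U $$ (x, i) * z x)^2)"
    by (rule sum_mono2) (use I in auto)
  thus ?thesis unfolding parseval .
qed

lemma pr_diag_bounds:
  assumes I: "I \<subseteq> {..<n}" and x: "x < n"
  shows "0 \<le> pr U I x x" "pr U I x x \<le> 1"
proof -
  show "0 \<le> pr U I x x" unfolding pr_def by (intro sum_nonneg) auto
  have "pr U I x x \<le> (\<Sum>i<n. U $$ (x, i) * U $$ (x, i))"
    unfolding pr_def by (rule sum_mono2) (use I in auto)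
  thus "pr U I x x \<le> 1" using orth_rows[OF x x] by simp
qed

lemma pr_trace:
  assumes I: "I \<subseteq> {..<n}"
  shows "(\<Sum>x<n. pr U I x x) = real (card I)"
proof -
  have "(\<Sum>x<n. pr U I x x) = (\<Sum>i\<in>I. \<Sum>x<n. U $$ (x, i) * U $$ (x, i))"
    unfolding pr_def by (rule sum.swap)
  also have "\<dots> = (\<Sum>i\<in>I. 1)" using I by (intro sum.cong refl) (auto simp: orth_cols)
  finally show ?thesis by simp
qed

lemma pr_sq:
  assumes I: "I \<subseteq> {..<n}" and x: "x < n"
  shows "(\<Sum>y<n. (pr U I x y)^2) = pr U I x x"
proof -
  have fI: "finite I" using I finite_subset by blast
  have "(\<Sum>y<n. (pr U I x y)^2) = (\<Sum>y<n. \<Sum>i\<in>I. \<Sum>j\<in>I. (U $$ (x, i) * U $$ (y, i)) * (U $$ (x, j) * U $$ (y, j)))"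
    unfolding pr_def by (simp only: sq_sum)
  also have "\<dots> = (\<Sum>i\<in>I. \<Sum>y<n. \<Sum>j\<in>I. (U $$ (x, i) * U $$ (y, i)) * (U $$ (x, j) * U $$ (y, j)))"
    by (rule sum.swap)
  also have "\<dots> = (\<Sum>i\<in>I. \<Sum>j\<in>I. \<Sum>y<n. (U $$ (x, i) * U $$ (y, i)) * (U $$ (x, j) * U $$ (y, j)))"
    by (rule sum.cong[OF refl], rule sum.swap)
  also have "\<dots> = (\<Sum>i\<in>I. \<Sum>j\<in>I. U $$ (x, i) * U $$ (x, j) * (\<Sum>y<n. U $$ (y, i) * U $$ (y, j)))"
    by (intro sum.cong refl) (simp add: sum_distrib_left mult_ac)
  also have "\<dots> = (\<Sum>i\<in>I. \<Sum>j\<in>I. U $$ (x, i) * U $$ (x, j) * (if i = j then 1 else 0))"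
  proof (intro sum.cong refl)
    fix i j assume "i \<in> I" "j \<in> I"
    hence "i < n" "j < n" using I by auto
    thus "U $$ (x, i) * U $$ (x, j) * (\<Sum>y<n. U $$ (y, i) * U $$ (y, j)) =
      U $$ (x, i) * U $$ (x, j) * (if i = j then 1 else 0)" by (simp add: orth_cols)
  qed
  also have "\<dots> = (\<Sum>i\<in>I. U $$ (x, i) * U $$ (x, i))"
    using fI by (intro sum.cong refl) (simp add: sum_delta_mult[of I _ "\<lambda>j. U $$ (x, _) * U $$ (x, j)"])
  also have "\<dots> = pr U I x x" unfolding pr_def ..
  finally show ?thesis .
qed

lemma pr_compl:
  assumes I: "I \<subseteq> {..<n}" and x: "x < n" and y: "y < n" and xy: "x \<noteq> y"
  shows "pr U I x y = - pr U ({..<n} - I) x y"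
proof -
  have "pr U I x y + pr U ({..<n} - I) x y = (\<Sum>i<n. U $$ (x, i) * U $$ (y, i))"
    unfolding pr_def using I by (subst sum.subset_diff[of I "{..<n}"]) auto
  also have "\<dots> = 0" using orth_rows[OF x y] xy by simp
  finally show ?thesis by simp
qed

lemma bip_bound:
  assumes I: "I \<subseteq> {..<n}" and X: "X \<subseteq> {..<n}"
  shows "(\<Sum>x\<in>X. \<Sum>y\<in>{..<n} - X. (pr U I x y)^2) \<le> real (card I) / 4"
proof -
  have fI: "finite I" using I finite_subset by blast
  have fX: "finite X" using X finite_subset by blast
  define G where "G i j = (\<Sum>x\<in>X. U $$ (x, i) * U $$ (x, j))" for i j
  define t where "t = (\<Sum>x\<in>X. pr U I x x)"
  define W where "W = (\<Sum>x\<in>X. \<Sum>y\<in>X. (pr U I x y)^2)"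
  have step1: "(\<Sum>y\<in>{..<n} - X. (pr U I x y)^2) = pr U I x x - (\<Sum>y\<in>X. (pr U I x y)^2)"
    if x: "x \<in> X" for x
  proof -
    have "x < n" using x X by auto
    hence "(\<Sum>y<n. (pr U I x y)^2) = pr U I x x" by (rule pr_sq[OF I])
    moreover have "(\<Sum>y<n. (pr U I x y)^2) = (\<Sum>y\<in>{..<n} - X. (pr U I x y)^2) + (\<Sum>y\<in>X. (pr U I x y)^2)"
      using X by (subst sum.subset_diff[of X "{..<n}"]) auto
    ultimately show ?thesis by simp
  qed
  have LHS: "(\<Sum>x\<in>X. \<Sum>y\<in>{..<n} - X. (pr U I x y)^2) = t - W"
    unfolding t_def W_def by (simp add: step1 sum_subtractf)
  have W_eq: "W = (\<Sum>i\<in>I. \<Sum>j\<in>I. (G i j)^2)"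
  proof -
    have "W = (\<Sum>x\<in>X. \<Sum>y\<in>X. \<Sum>i\<in>I. \<Sum>j\<in>I. (U $$ (x, i) * U $$ (x, j)) * (U $$ (y, i) * U $$ (y, j)))"
      unfolding W_def pr_def sq_sum by (intro sum.cong refl) (simp add: mult_ac)
    also have "\<dots> = (\<Sum>x\<in>X. \<Sum>i\<in>I. \<Sum>y\<in>X. \<Sum>j\<in>I. (U $$ (x, i) * U $$ (x, j)) * (U $$ (y, i) * U $$ (y, j)))"
      by (rule sum.cong[OF refl], rule sum.swap)
    also have "\<dots> = (\<Sum>x\<in>X. \<Sum>i\<in>I. \<Sum>j\<in>I. \<Sum>y\<in>X. (U $$ (x, i) * U $$ (x, j)) * (U $$ (y, i) * U $$ (y, j)))"
      by (rule sum.cong[OF refl], rule sum.cong[OF refl], rule sum.swap)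
    also have "\<dots> = (\<Sum>i\<in>I. \<Sum>x\<in>X. \<Sum>j\<in>I. \<Sum>y\<in>X. (U $$ (x, i) * U $$ (x, j)) * (U $$ (y, i) * U $$ (y, j)))"
      by (rule sum.swap)
    also have "\<dots> = (\<Sum>i\<in>I. \<Sum>j\<in>I. \<Sum>x\<in>X. \<Sum>y\<in>X. (U $$ (x, i) * U $$ (x, j)) * (U $$ (y, i) * U $$ (y, j)))"
      by (rule sum.cong[OF refl], rule sum.swap)
    also have "\<dots> = (\<Sum>i\<in>I. \<Sum>j\<in>I. (G i j)^2)"
      unfolding G_def power2_eq_square sum_product by simp
    finally show ?thesis .
  qed
  have W_ge: "W \<ge> (\<Sum>i\<in>I. (G i i)^2)"
    unfolding W_eq
  proof (rule sum_mono)
    fix i assume i: "i \<in> I"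
    show "(G i i)^2 \<le> (\<Sum>j\<in>I. (G i j)^2)"
      using member_le_sum[of i I "\<lambda>j. (G i j)^2"] i fI by simp
  qed
  have t_eq: "t = (\<Sum>i\<in>I. G i i)"
    unfolding t_def G_def pr_def by (rule sum.swap)
  have cs: "t^2 \<le> real (card I) * (\<Sum>i\<in>I. (G i i)^2)"
    unfolding t_eq by (rule cauchy_schwarz_card[OF fI])
  define c where "c = real (card I)"
  have c0: "c \<ge> 0" unfolding c_def by simp
  have "c * (\<Sum>i\<in>I. (G i i)^2) \<le> c * W" using mult_left_mono[OF W_ge c0] .
  hence "c * (t - W) \<le> c * t - t^2" using cs unfolding c_def[symmetric] by (simp add: right_diff_distrib)
  also have "\<dots> \<le> c^2 / 4"
  proof -
    have "0 \<le> (c / 2 - t)^2" by simp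
    thus ?thesis by (simp add: power2_eq_square algebra_simps)
  qed
  finally have main: "c * (t - W) \<le> c^2 / 4" .
  show ?thesis
  proof (cases "c = 0")
    case True
    hence "I = {}" unfolding c_def using fI by simp
    hence "t - W = 0" unfolding t_def W_def pr_def by simp
    thus ?thesis unfolding LHS by simp
  next
    case False
    hence "c > 0" using c0 by simp
    have "c * (t - W) \<le> c * (c / 4)" using main by (simp add: power2_eq_square)
    hence "t - W \<le> c / 4" using \<open>c > 0\<close> by (simp only: mult_le_cancel_left_pos)
    thus ?thesis unfolding LHS c_def .
  qed
qed

lemma star_bound:
  assumes I: "I \<subseteq> {..<n}" and c: "c < n" and N: "N \<subseteq> {..<n}" and cN: "c \<notin> N"
  shows "2 * (\<Sum>y\<in>N. pr U I c y) \<le> sqrt (real (card N))"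
proof -
  have fN: "finite N" using N finite_subset by blast
  define d where "d = real (card N)"
  show ?thesis
  proof (cases "N = {}")
    case True thus ?thesis by simp
  next
    case False
    hence dpos: "d > 0" unfolding d_def using fN by (simp add: card_gt_0_iff)
    define s where "s = sqrt d"
    have spos: "s > 0" unfolding s_def using dpos by simp
    have ss: "s * s = d" unfolding s_def using dpos by simp
    define a where "a i = U $$ (c, i)" for i
    define b where "b i = (\<Sum>y\<in>N. U $$ (y, i))" for i
    define z where "z x = (if x = c then s else 0) + (if x \<in> N then 1 else 0)" for x
    have Uz: "(\<Sum>x<n. U $$ (x, i) * z x) = s * a i + b i" for i
    proof -
      have "(\<Sum>x<n. U $$ (x, i) * z x) = (\<Sum>x<n. (if x = c then s * U $$ (c, i) else 0)) + (\<Sum>x<n. (if x \<in> N then U $$ (x, i) else 0))"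
      proof -
        have "U $$ (x, i) * z x = (if x = c then s * U $$ (c, i) else 0) + (if x \<in> N then U $$ (x, i) else 0)" for x
          unfolding z_def by (simp add: distrib_left mult.commute)
        thus ?thesis by (simp add: sum.distrib)
      qed
      also have "(\<Sum>x<n. (if x = c then s * U $$ (c, i) else 0)) = s * a i"
        unfolding a_def using c by (simp add: sum.delta')
      also have "(\<Sum>x<n. (if x \<in> N then U $$ (x, i) else 0)) = b i"
        unfolding b_def using N by (simp add: sum.If_cases Int_absorb1)
      finally show ?thesis .
    qed
    have zz: "(\<Sum>x<n. (z x)^2) = 2 * d"
    proof -
      have "(\<Sum>x<n. (z x)^2) = (\<Sum>x<n. (if x = c then s * s else 0)) + (\<Sum>x<n. (if x \<in> N then 1 else 0))"
      proof -
        have "(z x)^2 = (if x = c then s * s else 0) + (if x \<in> N then 1 else 0)" for x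
          unfolding z_def using cN by (cases "x = c") (auto simp: power2_eq_square)
        thus ?thesis by (simp add: sum.distrib)
      qed
      also have "(\<Sum>x<n. (if x = c then s * s else 0)) = d" using c ss by (simp add: sum.delta')
      also have "(\<Sum>x<n. (if x \<in> N then 1 else 0)) = (d::real)"
        unfolding d_def using N by (simp add: sum.If_cases Int_absorb1)
      finally show ?thesis by simp
    qed
    have bes: "(\<Sum>i\<in>I. (s * a i + b i)^2) \<le> 2 * d"
      using bessel[OF I, of z] unfolding Uz zz .
    have nn: "0 \<le> (\<Sum>i\<in>I. (s * a i - b i)^2)" by (intro sum_nonneg) auto
    have diff: "(\<Sum>i\<in>I. (s * a i + b i)^2) - (\<Sum>i\<in>I. (s * a i - b i)^2) = 4 * s * (\<Sum>i\<in>I. a i * b i)"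
    proof -
      have "(\<Sum>i\<in>I. (s * a i + b i)^2) - (\<Sum>i\<in>I. (s * a i - b i)^2) = (\<Sum>i\<in>I. (s * a i + b i)^2 - (s * a i - b i)^2)"
        by (simp add: sum_subtractf)
      also have "\<dots> = (\<Sum>i\<in>I. 4 * s * (a i * b i))"
        by (intro sum.cong refl) (simp add: power2_eq_square algebra_simps)
      also have "\<dots> = 4 * s * (\<Sum>i\<in>I. a i * b i)" by (simp add: sum_distrib_left)
      finally show ?thesis .
    qed
    have key: "4 * s * (\<Sum>i\<in>I. a i * b i) \<le> 2 * (s * s)" using bes nn diff ss by linarith
    have eq: "(\<Sum>y\<in>N. pr U I c y) = (\<Sum>i\<in>I. a i * b i)"
      unfolding pr_def a_def b_def by (subst sum.swap) (simp add: sum_distrib_left)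
    have "s * (2 * (\<Sum>i\<in>I. a i * b i)) \<le> s * s" using key by (simp add: algebra_simps)
    hence "2 * (\<Sum>i\<in>I. a i * b i) \<le> s" using spos by (simp add: mult_le_cancel_left_pos)
    thus ?thesis unfolding eq s_def d_def .
  qed
qed

lemma pairs_finite: "finite {(x, y). x < (n::nat) \<and> y < n \<and> E x y}"
  by (rule finite_subset[of _ "{..<n} \<times> {..<n}"]) auto

lemma a_bound_bip:
  assumes I: "I \<subseteq> {..<n}" and irr: "\<forall>u. \<not> E u u" and symE: "\<forall>u v. E u v \<longrightarrow> E v u"
    and X: "\<forall>u v. E u v \<longrightarrow> (u \<in> X \<longleftrightarrow> v \<notin> X)"
    and cardP: "card {(x, y). x < n \<and> y < n \<and> E x y} \<le> 2 * (n - 1)" and n1: "n \<ge> 1"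
    and J: "J = I \<or> J = {..<n} - I"
  shows "(\<Sum>x<n. \<Sum>y<n. if E x y then pr U I x y else 0) \<le> sqrt (real (card J) * (real n - 1))"
proof -
  define Pr where "Pr = {(x, y). x < n \<and> y < n \<and> E x y}"
  have fPr: "finite Pr" unfolding Pr_def by (rule pairs_finite)
  let ?h = "\<lambda>p. fst p \<in> X"
  let ?f = "\<lambda>p. pr U I (fst p) (snd p)"
  define H where "H = {p \<in> Pr. ?h p}"
  have sw: "\<And>x y. (x, y) \<in> Pr \<Longrightarrow> (y, x) \<in> Pr" unfolding Pr_def using symE by auto
  have hx: "\<And>x y. (x, y) \<in> Pr \<Longrightarrow> ?h (y, x) \<longleftrightarrow> \<not> ?h (x, y)" unfolding Pr_def using X by auto
  have fs: "\<And>x y. (x, y) \<in> Pr \<Longrightarrow> ?f (y, x) = ?f (x, y)" by (simp add: pr_sym)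
  note os = orient_sum[where f = ?f and h = ?h and Pr = Pr, OF fPr sw hx fs]
  have a_eq: "(\<Sum>x<n. \<Sum>y<n. if E x y then pr U I x y else 0) = 2 * sum ?f H"
    unfolding double_to_pairs Pr_def[symmetric] H_def using os(1) by simp
  have cH0: "card H \<le> n - 1" using os(2) cardP unfolding H_def Pr_def by simp
  have cH: "real (card H) \<le> real n - 1" using cH0 n1 by (simp add: of_nat_diff[symmetric])
  have fH: "finite H" unfolding H_def using fPr by simp
  have JI: "J \<subseteq> {..<n}" using J I by auto
  define X' where "X' = X \<inter> {..<n}"
  have HS: "H \<subseteq> (SIGMA x:X'. {..<n} - X')" unfolding H_def Pr_def X'_def using X by auto
  have sq_eq: "(?f p)^2 = (pr U J (fst p) (snd p))^2" if "p \<in> H" for p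
  proof -
    obtain x y where p: "p = (x, y)" by (cases p)
    have xy: "x < n" "y < n" "x \<noteq> y" using that irr unfolding p H_def Pr_def by auto
    show ?thesis using J
    proof
      assume "J = I" thus ?thesis by simp
    next
      assume "J = {..<n} - I"
      thus ?thesis unfolding p using pr_compl[OF I xy] by simp
    qed
  qed
  have "sum (\<lambda>p. (?f p)^2) H = sum (\<lambda>p. (pr U J (fst p) (snd p))^2) H"
    using sq_eq by (rule sum.cong[OF refl])
  also have "\<dots> \<le> sum (\<lambda>p. (pr U J (fst p) (snd p))^2) (SIGMA x:X'. {..<n} - X')"
    by (rule sum_mono2[OF _ HS]) (auto simp: X'_def)
  also have "\<dots> = (\<Sum>x\<in>X'. \<Sum>y\<in>{..<n} - X'. (pr U J x y)^2)"
    by (subst sum.Sigma) (auto simp: X'_def case_prod_beta)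
  also have "\<dots> \<le> real (card J) / 4" by (rule bip_bound[OF JI]) (auto simp: X'_def)
  finally have sq: "sum (\<lambda>p. (?f p)^2) H \<le> real (card J) / 4" .
  have "(sum ?f H)^2 \<le> real (card H) * sum (\<lambda>p. (?f p)^2) H" by (rule cauchy_schwarz_card[OF fH])
  also have "\<dots> \<le> (real n - 1) * (real (card J) / 4)"
  proof (rule mult_mono)
    show "real (card H) \<le> real n - 1" using cH by linarith
    show "0 \<le> real n - 1" using n1 by simp
  qed (use sq in \<open>auto intro: sum_nonneg\<close>)
  finally have "(2 * sum ?f H)^2 \<le> real (card J) * (real n - 1)" by (simp add: power_mult_distrib mult_ac)
  hence "2 * sum ?f H \<le> sqrt (real (card J) * (real n - 1))" by (rule real_le_rsqrt)
  thus ?thesis unfolding a_eq .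
qed

lemma a_bound_cover:
  assumes I: "I \<subseteq> {..<n}" and irr: "\<forall>u. \<not> E u u" and symE: "\<forall>u v. E u v \<longrightarrow> E v u"
    and C: "C \<subseteq> {..<n}" and cov: "\<forall>u v. E u v \<longrightarrow> u \<in> C \<or> v \<in> C"
    and cardP: "card {(x, y). x < n \<and> y < n \<and> E x y} \<le> 2 * (n - 1)" and n1: "n \<ge> 1"
  shows "(\<Sum>x<n. \<Sum>y<n. if E x y then pr U I x y else 0) \<le> sqrt (real (card C) * (real n - 1))"
proof -
  define Pr where "Pr = {(x, y). x < n \<and> y < n \<and> E x y}"
  have fPr: "finite Pr" unfolding Pr_def by (rule pairs_finite)
  let ?h = "\<lambda>p. fst p \<in> C \<and> (snd p \<notin> C \<or> fst p < snd p)"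
  let ?f = "\<lambda>p. pr U I (fst p) (snd p)"
  define H where "H = {p \<in> Pr. ?h p}"
  have sw: "\<And>x y. (x, y) \<in> Pr \<Longrightarrow> (y, x) \<in> Pr" unfolding Pr_def using symE by auto
  have hx: "?h (y, x) \<longleftrightarrow> \<not> ?h (x, y)" if "(x, y) \<in> Pr" for x y
  proof -
    have "E x y" "x \<noteq> y" using that irr unfolding Pr_def by auto
    thus ?thesis using cov by auto
  qed
  have fs: "\<And>x y. (x, y) \<in> Pr \<Longrightarrow> ?f (y, x) = ?f (x, y)" by (simp add: pr_sym)
  note os = orient_sum[where f = ?f and h = ?h and Pr = Pr, OF fPr sw hx fs]
  have a_eq: "(\<Sum>x<n. \<Sum>y<n. if E x y then pr U I x y else 0) = 2 * sum ?f H"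
    unfolding double_to_pairs Pr_def[symmetric] H_def using os(1) by simp
  have cH0: "card H \<le> n - 1" using os(2) cardP unfolding H_def Pr_def by simp
  have cH: "real (card H) \<le> real n - 1" using cH0 n1 by (simp add: of_nat_diff[symmetric])
  define N where "N c = {y. y < n \<and> E c y \<and> (y \<notin> C \<or> c < y)}" for c
  have fC: "finite C" using C finite_subset by blast
  have fN: "finite (N c)" for c unfolding N_def by auto
  have HS: "H = (SIGMA c:C. N c)" unfolding H_def Pr_def N_def using C by auto
  have "sum ?f H = (\<Sum>c\<in>C. \<Sum>y\<in>N c. pr U I c y)"
    unfolding HS by (subst sum.Sigma) (auto simp: fC fN case_prod_beta)
  hence "2 * sum ?f H = (\<Sum>c\<in>C. 2 * (\<Sum>y\<in>N c. pr U I c y))" by (simp add: sum_distrib_left)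
  also have "\<dots> \<le> (\<Sum>c\<in>C. sqrt (real (card (N c))))"
  proof (rule sum_mono)
    fix c assume c: "c \<in> C"
    show "2 * (\<Sum>y\<in>N c. pr U I c y) \<le> sqrt (real (card (N c)))"
      by (rule star_bound[OF I]) (use c C irr in \<open>auto simp: N_def\<close>)
  qed
  also have "\<dots> \<le> sqrt (real (card C) * (real n - 1))"
  proof (rule real_le_rsqrt)
    have "(\<Sum>c\<in>C. sqrt (real (card (N c))))^2 \<le> real (card C) * (\<Sum>c\<in>C. (sqrt (real (card (N c))))^2)"
      by (rule cauchy_schwarz_card[OF fC])
    also have "(\<Sum>c\<in>C. (sqrt (real (card (N c))))^2) = real (card H)"
      unfolding HS using fC fN by (simp add: card_SigmaI)
    also have "real (card C) * real (card H) \<le> real (card C) * (real n - 1)"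
      using cH by (intro mult_left_mono) auto
    finally show "(\<Sum>c\<in>C. sqrt (real (card (N c))))^2 \<le> real (card C) * (real n - 1)" by simp
  qed
  finally show ?thesis unfolding a_eq .
qed

end

lemma sum_nbr_swap:
  fixes F :: "nat \<Rightarrow> nat \<Rightarrow> real" and n :: nat
  assumes symE: "\<forall>u v. E u v \<longrightarrow> E v u"
  shows "(\<Sum>x<n. \<Sum>y<n. if E x y then F x y else 0) = (\<Sum>x<n. \<Sum>y<n. if E x y then F y x else 0)"
proof -
  have "(\<Sum>x<n. \<Sum>y<n. if E x y then F x y else 0) = (\<Sum>y<n. \<Sum>x<n. if E x y then F x y else 0)"
    by (rule sum.swap)
  also have "\<dots> = (\<Sum>y<n. \<Sum>x<n. if E y x then F x y else 0)"
    using symE by (intro sum.cong refl) (metis)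
  finally show ?thesis .
qed

lemma sum_nbr_card:
  fixes n :: nat
  shows "(\<Sum>y<n. if E x y then (c::real) else 0) = real (card {y. y < n \<and> E x y}) * c"
proof -
  have "(\<Sum>y<n. if E x y then c else 0) = sum (\<lambda>_. c) {y \<in> {..<n}. E x y}"
    using sum.inter_filter[of "{..<n}" "\<lambda>_. c" "E x"] by simp
  also have "{y \<in> {..<n}. E x y} = {y. y < n \<and> E x y}" by auto
  finally show ?thesis by simp
qed

lemma cs_nbr:
  fixes n :: nat and g :: "nat \<Rightarrow> real"
  shows "(\<Sum>y<n. if E x y then g y else 0)^2 \<le> real (card {y. y < n \<and> E x y}) * (\<Sum>y<n. if E x y then (g y)^2 else 0)"
proof -
  have e1: "(\<Sum>y<n. if E x y then g y else 0) = sum g {y. y < n \<and> E x y}"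
    using sum.inter_filter[of "{..<n}" g "E x"] by (simp add: Collect_conj_eq lessThan_def Int_commute)
  have e2: "(\<Sum>y<n. if E x y then (g y)^2 else 0) = sum (\<lambda>y. (g y)^2) {y. y < n \<and> E x y}"
    using sum.inter_filter[of "{..<n}" "\<lambda>y. (g y)^2" "E x"] by (simp add: Collect_conj_eq lessThan_def Int_commute)
  show ?thesis unfolding e1 e2 by (rule cauchy_schwarz_card) simp
qed

lemma eig_key:
  fixes v :: "nat \<Rightarrow> real" and d :: "nat \<Rightarrow> nat" and n :: nat and \<mu> :: real
  assumes symE: "\<forall>u v. E u v \<longrightarrow> E v u"
    and dx: "\<And>x. x < n \<Longrightarrow> d x = card {y. y < n \<and> E x y}"
    and dpos: "\<And>x. x < n \<Longrightarrow> d x \<ge> 1"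
    and unit: "(\<Sum>x<n. (v x)^2) = 1"
    and eig: "\<And>x. x < n \<Longrightarrow> real (d x) * v x + (\<Sum>y<n. if E x y then v y else 0) = \<mu> * v x"
  shows "\<mu> \<ge> 0" "\<mu> - 2 \<le> (\<Sum>x<n. \<mu> * (v x)^2 * (1 - 1 / real (d x)))"
proof -
  define S where "S x = (\<Sum>y<n. if E x y then (v x + v y)^2 else 0)" for x
  have nb: "(\<Sum>y<n. if E x y then v x + v y else 0) = \<mu> * v x" if x: "x < n" for x
  proof -
    have "(\<Sum>y<n. if E x y then v x + v y else 0) = (\<Sum>y<n. if E x y then v x else 0) + (\<Sum>y<n. if E x y then v y else 0)"
      by (simp add: sum.distrib[symmetric] if_distrib cong: if_cong)
    also have "(\<Sum>y<n. if E x y then v x else 0) = real (d x) * v x"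
      using sum_nbr_card[where E = E and x = x and n = n and c = "v x"] dx[OF x] by simp
    finally show ?thesis using eig[OF x] by simp
  qed
  have first: "(\<Sum>x<n. \<Sum>y<n. if E x y then v x * (v x + v y) else 0) = \<mu>"
  proof -
    have "(\<Sum>x<n. \<Sum>y<n. if E x y then v x * (v x + v y) else 0) = (\<Sum>x<n. v x * (\<Sum>y<n. if E x y then v x + v y else 0))"
      by (simp add: sum_distrib_left if_distrib cong: if_cong)
    also have "\<dots> = (\<Sum>x<n. \<mu> * (v x)^2)" by (intro sum.cong refl) (simp add: nb power2_eq_square)
    also have "\<dots> = \<mu>" using unit by (simp add: sum_distrib_left[symmetric])
    finally show ?thesis .
  qed
  have second: "(\<Sum>x<n. \<Sum>y<n. if E x y then v y * (v y + v x) else 0) = \<mu>"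
    using sum_nbr_swap[OF symE, of "\<lambda>x y. v x * (v x + v y)" n] first by simp
  have sumS: "(\<Sum>x<n. S x) = 2 * \<mu>"
  proof -
    have "(\<Sum>x<n. S x) = (\<Sum>x<n. \<Sum>y<n. (if E x y then v x * (v x + v y) else 0) + (if E x y then v y * (v y + v x) else 0))"
      unfolding S_def by (intro sum.cong refl) (simp add: power2_eq_square algebra_simps)
    also have "\<dots> = 2 * \<mu>" using first second by (simp add: sum.distrib)
    finally show ?thesis .
  qed
  have S0: "S x \<ge> 0" for x unfolding S_def by (intro sum_nonneg) auto
  show mu0: "\<mu> \<ge> 0" using sumS sum_nonneg[of "{..<n}" S] S0 by simp
  have csx: "\<mu>^2 * (v x)^2 / real (d x) \<le> S x" if x: "x < n" for x
  proof -
    have "(\<mu> * v x)^2 \<le> real (d x) * S x"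
      using cs_nbr[where E = E and x = x and n = n and g = "\<lambda>y. v x + v y"] nb[OF x] dx[OF x] unfolding S_def by simp
    moreover have "real (d x) > 0" using dpos[OF x] by simp
    ultimately show ?thesis by (simp add: field_simps power_mult_distrib)
  qed
  have tot: "\<mu>^2 * (\<Sum>x<n. (v x)^2 / real (d x)) \<le> 2 * \<mu>"
  proof -
    have "\<mu>^2 * (\<Sum>x<n. (v x)^2 / real (d x)) = (\<Sum>x<n. \<mu>^2 * (v x)^2 / real (d x))"
      by (simp add: sum_distrib_left)
    also have "\<dots> \<le> (\<Sum>x<n. S x)" by (rule sum_mono) (use csx in auto)
    finally show ?thesis using sumS by simp
  qed
  have R: "(\<Sum>x<n. \<mu> * (v x)^2 * (1 - 1 / real (d x))) = \<mu> - \<mu> * (\<Sum>x<n. (v x)^2 / real (d x))"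
  proof -
    have "(\<Sum>x<n. \<mu> * (v x)^2 * (1 - 1 / real (d x))) = (\<Sum>x<n. \<mu> * (v x)^2 - \<mu> * ((v x)^2 / real (d x)))"
      by (intro sum.cong refl) (simp add: algebra_simps)
    also have "\<dots> = \<mu> * (\<Sum>x<n. (v x)^2) - \<mu> * (\<Sum>x<n. (v x)^2 / real (d x))"
      by (simp add: sum_subtractf sum_distrib_left)
    finally show ?thesis using unit by simp
  qed
  show "\<mu> - 2 \<le> (\<Sum>x<n. \<mu> * (v x)^2 * (1 - 1 / real (d x)))"
  proof (cases "\<mu> = 0")
    case True
    thus ?thesis by simp
  next
    case False
    hence mp: "\<mu> > 0" using mu0 by simp
    have "\<mu> * (\<mu> * (\<Sum>x<n. (v x)^2 / real (d x))) \<le> \<mu> * 2" using tot by (simp add: power2_eq_square mult_ac)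
    hence "\<mu> * (\<Sum>x<n. (v x)^2 / real (d x)) \<le> 2" using mp by (simp add: mult_le_cancel_left_pos)
    thus ?thesis unfolding R by simp
  qed
qed

lemma swap4:
  fixes T :: "nat \<Rightarrow> nat \<Rightarrow> nat \<Rightarrow> nat \<Rightarrow> real"
  shows "(\<Sum>x\<in>A. \<Sum>y\<in>A. \<Sum>j\<in>B. \<Sum>i\<in>C. T x y j i) = (\<Sum>j\<in>B. \<Sum>i\<in>C. \<Sum>x\<in>A. \<Sum>y\<in>A. T x y j i)"
proof -
  have "(\<Sum>x\<in>A. \<Sum>y\<in>A. \<Sum>j\<in>B. \<Sum>i\<in>C. T x y j i) = (\<Sum>x\<in>A. \<Sum>j\<in>B. \<Sum>y\<in>A. \<Sum>i\<in>C. T x y j i)"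
    by (rule sum.cong[OF refl], rule sum.swap)
  also have "\<dots> = (\<Sum>j\<in>B. \<Sum>x\<in>A. \<Sum>y\<in>A. \<Sum>i\<in>C. T x y j i)" by (rule sum.swap)
  also have "\<dots> = (\<Sum>j\<in>B. \<Sum>x\<in>A. \<Sum>i\<in>C. \<Sum>y\<in>A. T x y j i)"
    by (rule sum.cong[OF refl], rule sum.cong[OF refl], rule sum.swap)
  also have "\<dots> = (\<Sum>j\<in>B. \<Sum>i\<in>C. \<Sum>x\<in>A. \<Sum>y\<in>A. T x y j i)"
    by (rule sum.cong[OF refl], rule sum.swap)
  finally show ?thesis .
qed

lemma q_bound:
  fixes U :: "real mat" and n :: nat
  assumes U: "U \<in> carrier_mat n n" "transpose_mat U * U = 1\<^sub>m n" "U * transpose_mat U = 1\<^sub>m n"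
    and I: "I \<subseteq> {..<n}" and irr: "\<forall>u. \<not> E u u" and symE: "\<forall>u v. E u v \<longrightarrow> E v u"
    and dpos: "\<forall>x<n. degree n E x \<ge> 1"
    and dsum: "(\<Sum>x<n. degree n E x) \<le> 2 * (n - 1)" and n1: "n \<ge> 1"
  shows "(\<Sum>x<n. \<Sum>y<n. ((if x = y then real (degree n E x) else 0) + (if E x y then 1 else 0)) * pr U I x y)
    \<le> real n + 2 * real (card I) - 2"
proof -
  define Qf where "Qf x y = (if x = y then real (degree n E x) else 0) + (if E x y then 1 else 0)" for x y
  define Qm where "Qm = mat n n (\<lambda>(x, y). Qf x y)"
  have Qm: "Qm \<in> carrier_mat n n" unfolding Qm_def by simp
  have Qsym: "transpose_mat Qm = Qm"
  proof (rule eq_matI)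
    fix i j assume ij: "i < dim_row Qm" "j < dim_col Qm"
    have "E j i = E i j" using symE by blast
    thus "transpose_mat Qm $$ (i, j) = Qm $$ (i, j)" using ij Qm unfolding Qm_def Qf_def by auto
  qed (use Qm in auto)
  obtain V Dg where V: "V \<in> carrier_mat n n" and VV: "transpose_mat V * V = 1\<^sub>m n"
    and VV': "V * transpose_mat V = 1\<^sub>m n"
    and e1: "\<forall>x<n. \<forall>y<n. Qm $$ (x, y) = (\<Sum>j<n. V $$ (x, j) * Dg $$ (j, j) * V $$ (y, j))"
    using spectral_entries[OF Qm Qsym] by blast
  define \<mu> where "\<mu> j = Dg $$ (j, j)" for j
  have Qe: "Qf x y = (\<Sum>j<n. V $$ (x, j) * \<mu> j * V $$ (y, j))" if "x < n" "y < n" for x y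
    using e1 that unfolding \<mu>_def Qm_def by simp
  define c where "c j = (\<Sum>i\<in>I. (\<Sum>x<n. V $$ (x, j) * U $$ (x, i))^2)" for j
  have main: "(\<Sum>x<n. \<Sum>y<n. Qf x y * pr U I x y) = (\<Sum>j<n. \<mu> j * c j)"
  proof -
    have "(\<Sum>x<n. \<Sum>y<n. Qf x y * pr U I x y)
        = (\<Sum>x<n. \<Sum>y<n. \<Sum>j<n. \<Sum>i\<in>I. \<mu> j * ((V $$ (x, j) * U $$ (x, i)) * (V $$ (y, j) * U $$ (y, i))))"
      by (intro sum.cong refl) (simp add: Qe pr_def sum_product mult_ac, rule sum.swap)
    also have "\<dots> = (\<Sum>j<n. \<Sum>i\<in>I. \<Sum>x<n. \<Sum>y<n. \<mu> j * ((V $$ (x, j) * U $$ (x, i)) * (V $$ (y, j) * U $$ (y, i))))"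
      by (rule swap4)
    also have "\<dots> = (\<Sum>j<n. \<mu> j * (\<Sum>i\<in>I. \<Sum>x<n. \<Sum>y<n. (V $$ (x, j) * U $$ (x, i)) * (V $$ (y, j) * U $$ (y, i))))"
      by (simp add: sum_distrib_left)
    also have "\<dots> = (\<Sum>j<n. \<mu> j * c j)"
      by (simp only: c_def sq_sum)
    finally show ?thesis .
  qed
  have c0: "c j \<ge> 0" for j unfolding c_def by (intro sum_nonneg) auto
  have c1: "c j \<le> 1" if j: "j < n" for j
  proof -
    have "c j \<le> (\<Sum>x<n. (V $$ (x, j))^2)"
      unfolding c_def using bessel[OF U I, of "\<lambda>x. V $$ (x, j)"] by (simp add: mult.commute)
    also have "\<dots> = 1" using orth_cols[OF V VV VV' j j] by (simp add: power2_eq_square)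
    finally show ?thesis .
  qed
  have csum: "(\<Sum>j<n. c j) = real (card I)"
  proof -
    have "(\<Sum>j<n. c j) = (\<Sum>i\<in>I. \<Sum>j<n. (\<Sum>x<n. V $$ (x, j) * U $$ (x, i))^2)"
      unfolding c_def by (rule sum.swap)
    also have "\<dots> = (\<Sum>i\<in>I. 1)"
    proof (rule sum.cong[OF refl])
      fix i assume i: "i \<in> I"
      hence "i < n" using I by auto
      have "(\<Sum>j<n. (\<Sum>x<n. V $$ (x, j) * U $$ (x, i))^2) = (\<Sum>x<n. (U $$ (x, i))^2)"
        by (rule parseval[OF V VV VV'])
      also have "\<dots> = 1" using orth_cols[OF U \<open>i < n\<close> \<open>i < n\<close>] by (simp add: power2_eq_square)
      finally show "(\<Sum>j<n. (\<Sum>x<n. V $$ (x, j) * U $$ (x, i))^2) = 1" .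
    qed
    finally show ?thesis by simp
  qed
  define R where "R j = (\<Sum>x<n. \<mu> j * (V $$ (x, j))^2 * (1 - 1 / real (degree n E x)))" for j
  have eigj: "\<mu> j \<ge> 0 \<and> \<mu> j - 2 \<le> R j" if j: "j < n" for j
  proof -
    have eig: "real (degree n E x) * V $$ (x, j) + (\<Sum>y<n. if E x y then V $$ (y, j) else 0) = \<mu> j * V $$ (x, j)"
      if x: "x < n" for x
    proof -
      have "(\<Sum>y<n. Qf x y * V $$ (y, j)) = (\<Sum>y<n. \<Sum>l<n. V $$ (x, l) * \<mu> l * (V $$ (y, l) * V $$ (y, j)))"
        using x by (intro sum.cong refl) (simp add: Qe sum_distrib_right sum_distrib_left mult_ac)
      also have "\<dots> = (\<Sum>l<n. V $$ (x, l) * \<mu> l * (\<Sum>y<n. V $$ (y, l) * V $$ (y, j)))"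
        by (subst sum.swap) (simp add: sum_distrib_left)
      also have "\<dots> = (\<Sum>l<n. V $$ (x, l) * \<mu> l * (if j = l then 1 else 0))"
      proof (rule sum.cong[OF refl])
        fix l assume "l \<in> {..<n}"
        hence "l < n" by simp
        thus "V $$ (x, l) * \<mu> l * (\<Sum>y<n. V $$ (y, l) * V $$ (y, j)) = V $$ (x, l) * \<mu> l * (if j = l then 1 else 0)"
          using orth_cols[OF V VV VV' \<open>l < n\<close> j] by auto
      qed
      also have "\<dots> = V $$ (x, j) * \<mu> j"
        using sum_delta_mult[of "{..<n}" j "\<lambda>l. V $$ (x, l) * \<mu> l"] j by simp
      finally have A: "(\<Sum>y<n. Qf x y * V $$ (y, j)) = \<mu> j * V $$ (x, j)" by simp
      have "(\<Sum>y<n. Qf x y * V $$ (y, j)) = (\<Sum>y<n. (if x = y then real (degree n E x) * V $$ (y, j) else 0))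
          + (\<Sum>y<n. if E x y then V $$ (y, j) else 0)"
      proof -
        have "Qf x y * V $$ (y, j) = (if x = y then real (degree n E x) * V $$ (y, j) else 0) + (if E x y then V $$ (y, j) else 0)" for y
          unfolding Qf_def by (auto simp: distrib_right)
        thus ?thesis by (simp add: sum.distrib)
      qed
      also have "(\<Sum>y<n. (if x = y then real (degree n E x) * V $$ (y, j) else 0)) = real (degree n E x) * V $$ (x, j)"
        using x by (simp add: sum.delta)
      finally show ?thesis using A by simp
    qed
    have unit: "(\<Sum>x<n. (V $$ (x, j))^2) = 1" using orth_cols[OF V VV VV' j j] by (simp add: power2_eq_square)
    note k = eig_key[where E = E and v = "\<lambda>x. V $$ (x, j)" and d = "degree n E" and n = n and \<mu> = "\<mu> j",
        OF symE _ _ unit eig]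
    have dd: "\<And>x. x < n \<Longrightarrow> degree n E x = card {y. y < n \<and> E x y}" unfolding degree_def by simp
    show ?thesis using k[OF dd] dpos unfolding R_def by auto
  qed
  have R0: "R j \<ge> 0" if j: "j < n" for j
    unfolding R_def using eigj[OF j] dpos
    by (intro sum_nonneg mult_nonneg_nonneg) (auto simp: field_simps)
  have Rsum: "(\<Sum>j<n. R j) = (\<Sum>x<n. real (degree n E x) - 1)"
  proof -
    have "(\<Sum>j<n. R j) = (\<Sum>x<n. (1 - 1 / real (degree n E x)) * (\<Sum>j<n. V $$ (x, j) * \<mu> j * V $$ (x, j)))"
      unfolding R_def by (subst sum.swap) (simp add: sum_distrib_left power2_eq_square mult_ac)
    also have "\<dots> = (\<Sum>x<n. (1 - 1 / real (degree n E x)) * Qf x x)"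
      by (intro sum.cong refl) (simp add: Qe)
    also have "\<dots> = (\<Sum>x<n. real (degree n E x) - 1)"
    proof (rule sum.cong[OF refl])
      fix x assume "x \<in> {..<n}"
      hence "degree n E x \<ge> 1" using dpos by auto
      thus "(1 - 1 / real (degree n E x)) * Qf x x = real (degree n E x) - 1"
        unfolding Qf_def using irr by (simp add: field_simps)
    qed
    finally show ?thesis .
  qed
  have "(\<Sum>j<n. \<mu> j * c j) \<le> (\<Sum>j<n. 2 * c j + R j)"
  proof (rule sum_mono)
    fix j assume "j \<in> {..<n}"
    hence j: "j < n" by simp
    have "\<mu> j * c j = 2 * c j + (\<mu> j - 2) * c j" by (simp add: algebra_simps)
    also have "(\<mu> j - 2) * c j \<le> R j * c j" using eigj[OF j] c0[of j] by (intro mult_right_mono) auto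
    also have "R j * c j \<le> R j" using R0[OF j] c1[OF j] by (simp add: mult_left_le)
    finally show "\<mu> j * c j \<le> 2 * c j + R j" by simp
  qed
  also have "\<dots> = 2 * real (card I) + (\<Sum>x<n. real (degree n E x) - 1)"
    by (simp add: sum.distrib sum_distrib_left[symmetric] csum Rsum)
  also have "(\<Sum>x<n. real (degree n E x) - 1) = real (\<Sum>x<n. degree n E x) - real n"
    by (simp add: sum_subtractf)
  also have "real (\<Sum>x<n. degree n E x) \<le> 2 * real n - 2"
  proof -
    have "real (\<Sum>x<n. degree n E x) \<le> real (2 * (n - 1))" using dsum by (simp only: of_nat_le_iff)
    also have "\<dots> \<le> 2 * real n - 2" using n1 by (cases n) auto
    finally show ?thesis .
  qed
  finally show ?thesis unfolding main[symmetric] Qf_def by simp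
qed

lemma frame_to_pr:
  "(\<Sum>i\<in>I. \<Sum>x<n. \<Sum>y<n. U $$ (x, i) * M $$ (x, y) * U $$ (y, i)) = (\<Sum>x<n. \<Sum>y<n. M $$ (x, y) * pr U I x y)"
proof -
  have "(\<Sum>i\<in>I. \<Sum>x<n. \<Sum>y<n. U $$ (x, i) * M $$ (x, y) * U $$ (y, i)) = (\<Sum>x<n. \<Sum>i\<in>I. \<Sum>y<n. U $$ (x, i) * M $$ (x, y) * U $$ (y, i))"
    by (rule sum.swap)
  also have "\<dots> = (\<Sum>x<n. \<Sum>y<n. \<Sum>i\<in>I. U $$ (x, i) * M $$ (x, y) * U $$ (y, i))"
    by (rule sum.cong[OF refl], rule sum.swap)
  also have "\<dots> = (\<Sum>x<n. \<Sum>y<n. M $$ (x, y) * pr U I x y)"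
    unfolding pr_def by (simp add: sum_distrib_left mult_ac)
  finally show ?thesis .
qed

lemma matching_le:
  assumes "M \<subseteq> edge_set n E" "pairwise disjnt M"
  shows "card M \<le> matching_number n E"
proof -
  have fE: "finite (edge_set n E)"
  proof -
    have "edge_set n E = (\<lambda>(u, v). {u, v}) ` {(u, v). u < n \<and> v < n \<and> E u v}"
      unfolding edge_set_def by auto
    moreover have "finite {(u, v). u < n \<and> v < n \<and> E u v}"
      by (rule finite_subset[of _ "{..<n} \<times> {..<n}"]) auto
    ultimately show ?thesis by simp
  qed
  have "{card M | M. is_matching n E M} \<subseteq> card ` Pow (edge_set n E)"
    unfolding is_matching_def by auto
  hence fin: "finite {card M | M. is_matching n E M}" using fE by (meson finite_Pow_iff finite_imageI finite_subset)
  have "card M \<in> {card M | M. is_matching n E M}" using assms unfolding is_matching_def by blast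
  thus ?thesis unfolding matching_number_def using fin by (rule Max_ge[rotated])
qed

lemma A_alpha_entry:
  assumes "x < n" "y < n"
  shows "A_alpha \<alpha> n E $$ (x, y) = \<alpha> * (if x = y then real (degree n E x) else 0) + (1 - \<alpha>) * (if E x y then 1 else 0)"
  using assms unfolding A_alpha_def deg_mat_def adj_mat_def by simp

theorem theorem4p2:
  fixes n k :: nat and E :: "nat \<Rightarrow> nat \<Rightarrow> bool" and \<alpha> :: real
  assumes tree: "is_tree n E"
    and k: "1 \<le> k" "k \<le> n"
    and alpha: "0 \<le> \<alpha>" "\<alpha> < 1"
  defines "\<beta> \<equiv> matching_number n E"
  shows "(\<alpha> < 1/2 \<longrightarrow>
           S_k k (A_alpha \<alpha> n E) \<le>
             (if k \<le> \<beta> then \<alpha> * (real n + 2 * real k - 2) + (1 - 2 * \<alpha>) * sqrt (real k * (real n - 1))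
              else if k \<le> n - \<beta> then \<alpha> * (real n + 2 * real k - 2) + (1 - 2 * \<alpha>) * sqrt (real \<beta> * (real n - 1))
              else \<alpha> * (real n + 2 * real k - 2) + (1 - 2 * \<alpha>) * sqrt (real (n - k) * (real n - 1))))
       \<and> (1/2 \<le> \<alpha> \<longrightarrow> S_k k (A_alpha \<alpha> n E) \<le> \<alpha> * (real n + 2 * real k - 2))"
proof -
  have n1: "n \<ge> 1" and sg: "simple_graph n E" and acyc: "acyclic_graph E"
    using tree unfolding is_tree_def by auto
  have conn: "connected_graph n E" using tree unfolding is_tree_def by auto
  have bnd: "\<And>u v. E u v \<Longrightarrow> u < n \<and> v < n" using sg unfolding simple_graph_def by blast
  have symE: "\<forall>u v. E u v \<longrightarrow> E v u" using sg unfolding simple_graph_def by blast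
  have irr: "\<forall>u. \<not> E u u" using sg unfolding simple_graph_def by blast
  define Pr where "Pr = {(x, y). x < n \<and> y < n \<and> E x y}"
  have cardP0: "card {(u, v). u \<in> {..<n} \<and> v \<in> {..<n} \<and> E u v} + 2 \<le> 2 * card {..<n}"
  proof -
    have "0 \<in> {..<n}" using n1 by simp
    hence "{..<n} \<noteq> {}" by blast
    thus ?thesis using forest_edges[OF symE irr acyc, of "{..<n}"] by simp
  qed
  have cardP: "card Pr \<le> 2 * (n - 1)" using cardP0 unfolding Pr_def by simp
  have dsum_eq: "(\<Sum>x<n. degree n E x) = card Pr"
  proof -
    have "Pr = (SIGMA x:{..<n}. {y. y < n \<and> E x y})" unfolding Pr_def by auto
    hence "card Pr = (\<Sum>x<n. card {y. y < n \<and> E x y})" by (simp add: card_SigmaI)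
    thus ?thesis unfolding degree_def by simp
  qed
  have dsum: "(\<Sum>x<n. degree n E x) \<le> 2 * (n - 1)" using dsum_eq cardP by simp
  obtain X where X0: "\<forall>u\<in>{..<n}. \<forall>v\<in>{..<n}. E u v \<longrightarrow> (u \<in> X \<longleftrightarrow> v \<notin> X)"
    using forest_bipartite[OF symE irr acyc, of "{..<n}"] by auto
  have X: "\<forall>u v. E u v \<longrightarrow> (u \<in> X \<longleftrightarrow> v \<notin> X)" using X0 bnd by blast
  obtain C M where C: "C \<subseteq> {..<n}" and cov0: "\<forall>u\<in>{..<n}. \<forall>v\<in>{..<n}. E u v \<longrightarrow> u \<in> C \<or> v \<in> C"
    and M: "M \<subseteq> {{u, v} | u v. u \<in> {..<n} \<and> v \<in> {..<n} \<and> E u v}" "pairwise disjnt M"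
    and cCM: "card C \<le> card M"
    using forest_cover[OF symE irr acyc, of "{..<n}"] by auto
  have cov: "\<forall>u v. E u v \<longrightarrow> u \<in> C \<or> v \<in> C" using cov0 bnd by blast
  have "M \<subseteq> edge_set n E" using M(1) unfolding edge_set_def by auto
  hence cCb: "card C \<le> \<beta>" unfolding \<beta>_def using matching_le[OF _ M(2)] cCM by fastforce
  let ?A = "A_alpha \<alpha> n E"
  have Acar: "?A \<in> carrier_mat n n" unfolding A_alpha_def deg_mat_def adj_mat_def by simp
  have Asym: "transpose_mat ?A = ?A"
  proof (rule eq_matI)
    fix i j assume ij: "i < dim_row ?A" "j < dim_col ?A"
    hence ij': "i < n" "j < n" using Acar by auto
    have "E j i = E i j" using symE by blast
    thus "transpose_mat ?A $$ (i, j) = ?A $$ (i, j)" using ij ij' Acar by (auto simp: A_alpha_entry)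
  qed (use Acar in auto)
  obtain U I where U: "U \<in> carrier_mat n n" "transpose_mat U * U = 1\<^sub>m n" "U * transpose_mat U = 1\<^sub>m n"
    and I: "I \<subseteq> {..<n}" and cI: "card I = k"
    and Sk: "S_k k ?A = (\<Sum>i\<in>I. \<Sum>x<n. \<Sum>y<n. U $$ (x, i) * ?A $$ (x, y) * U $$ (y, i))"
    using S_k_frame[OF Acar Asym k(2)] by blast
  define s where "s = (\<Sum>x<n. real (degree n E x) * pr U I x x)"
  define a where "a = (\<Sum>x<n. \<Sum>y<n. if E x y then pr U I x y else 0)"
  define q where "q = (\<Sum>x<n. \<Sum>y<n. ((if x = y then real (degree n E x) else 0) + (if E x y then 1 else 0)) * pr U I x y)"
  have sdef2: "(\<Sum>x<n. \<Sum>y<n. (if x = y then real (degree n E x) else 0) * pr U I x y) = s"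
    unfolding s_def
  proof (rule sum.cong[OF refl])
    fix x assume x: "x \<in> {..<n}"
    have "(if x = y then real (degree n E x) else 0) * pr U I x y = (if x = y then real (degree n E x) * pr U I x x else 0)" for y
      by auto
    hence "(\<Sum>y<n. (if x = y then real (degree n E x) else 0) * pr U I x y) = (\<Sum>y<n. if x = y then real (degree n E x) * pr U I x x else 0)"
      by simp
    also have "\<dots> = real (degree n E x) * pr U I x x" using x by (simp add: sum.delta)
    finally show "(\<Sum>y<n. (if x = y then real (degree n E x) else 0) * pr U I x y) = real (degree n E x) * pr U I x x" .
  qed
  have adef2: "(\<Sum>x<n. \<Sum>y<n. (if E x y then 1 else 0) * pr U I x y) = a"
    unfolding a_def by (intro sum.cong refl) simp
  have S_eq: "S_k k ?A = \<alpha> * s + (1 - \<alpha>) * a"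
  proof -
    have "S_k k ?A = (\<Sum>x<n. \<Sum>y<n. ?A $$ (x, y) * pr U I x y)" unfolding Sk by (rule frame_to_pr)
    also have "\<dots> = (\<Sum>x<n. \<Sum>y<n. \<alpha> * ((if x = y then real (degree n E x) else 0) * pr U I x y)
        + (1 - \<alpha>) * ((if E x y then 1 else 0) * pr U I x y))"
      by (intro sum.cong refl) (simp add: A_alpha_entry algebra_simps)
    also have "\<dots> = \<alpha> * (\<Sum>x<n. \<Sum>y<n. (if x = y then real (degree n E x) else 0) * pr U I x y)
        + (1 - \<alpha>) * (\<Sum>x<n. \<Sum>y<n. (if E x y then 1 else 0) * pr U I x y)"
      by (simp add: sum.distrib sum_distrib_left)
    finally show ?thesis unfolding sdef2 adef2 .
  qed
  have q_eq: "q = s + a"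
  proof -
    have "q = (\<Sum>x<n. \<Sum>y<n. (if x = y then real (degree n E x) else 0) * pr U I x y)
        + (\<Sum>x<n. \<Sum>y<n. (if E x y then 1 else 0) * pr U I x y)"
      unfolding q_def by (simp add: sum.distrib distrib_right)
    thus ?thesis unfolding sdef2 adef2 .
  qed
  show ?thesis
  proof (cases "n = 1")
    case True
    have noE: "\<not> E x y" for x y using bnd[of x y] irr True by auto
    have a0: "a = 0" unfolding a_def using noE by simp
    have "degree n E x = 0" for x unfolding degree_def using noE by simp
    hence s0: "s = 0" unfolding s_def by simp
    have S0: "S_k k ?A = 0" using S_eq a0 s0 by simp
    have kk: "k = 1" using k True by simp
    show ?thesis using S0 alpha True kk by auto
  next
    case False
    hence n2: "n \<ge> 2" using n1 by simp
    have dpos: "\<forall>x<n. degree n E x \<ge> 1"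
    proof (intro allI impI)
      fix x assume x: "x < n"
      define y :: nat where "y = (if x = 0 then 1 else 0)"
      have y: "y < n" "y \<noteq> x" unfolding y_def using n2 by auto
      have "E\<^sup>*\<^sup>* x y" using conn x y unfolding connected_graph_def by blast
      then obtain z where "E x z" using y(2) by (cases rule: converse_rtranclpE) auto
      hence "z \<in> {v. v < n \<and> E x v}" using bnd by auto
      moreover have "finite {v. v < n \<and> E x v}" by simp
      ultimately have "card {v. v < n \<and> E x v} > 0" by (auto simp: card_gt_0_iff)
      thus "degree n E x \<ge> 1" unfolding degree_def by simp
    qed
    have qb: "q \<le> real n + 2 * real k - 2"
      using q_bound[OF U I irr symE dpos dsum n1] unfolding q_def cI .
    have sb: "s \<le> real n + real k - 2"
    proof -
      have "s = (\<Sum>x<n. pr U I x x) + (\<Sum>x<n. (real (degree n E x) - 1) * pr U I x x)"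
        unfolding s_def by (simp add: sum.distrib[symmetric] algebra_simps)
      also have "(\<Sum>x<n. pr U I x x) = real k" using pr_trace[OF U I] cI by simp
      also have "(\<Sum>x<n. (real (degree n E x) - 1) * pr U I x x) \<le> (\<Sum>x<n. real (degree n E x) - 1)"
      proof (rule sum_mono)
        fix x assume "x \<in> {..<n}"
        hence x: "x < n" by simp
        have "real (degree n E x) - 1 \<ge> 0" using dpos x by simp
        thus "(real (degree n E x) - 1) * pr U I x x \<le> real (degree n E x) - 1"
          using pr_diag_bounds[OF U I x] by (simp add: mult_left_le)
      qed
      also have "(\<Sum>x<n. real (degree n E x) - 1) = real (\<Sum>x<n. degree n E x) - real n"
        by (simp add: sum_subtractf)
      also have "real (\<Sum>x<n. degree n E x) \<le> 2 * real n - 2"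
      proof -
        have "real (\<Sum>x<n. degree n E x) \<le> real (2 * (n - 1))" using dsum by (simp only: of_nat_le_iff)
        also have "\<dots> = 2 * real n - 2" using n1 by (simp add: of_nat_diff)
        finally show ?thesis .
      qed
      finally show ?thesis by simp
    qed
    have ak: "a \<le> sqrt (real k * (real n - 1))"
      using a_bound_bip[OF U I irr symE X cardP[unfolded Pr_def] n1, of I] cI unfolding a_def by simp
    have ank: "a \<le> sqrt (real (n - k) * (real n - 1))"
    proof -
      have "card ({..<n} - I) = n - k" using I cI by (simp add: card_Diff_subset finite_subset)
      thus ?thesis using a_bound_bip[OF U I irr symE X cardP[unfolded Pr_def] n1, of "{..<n} - I"]
        unfolding a_def by simp
    qed
    have ab: "a \<le> sqrt (real \<beta> * (real n - 1))"
    proof -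
      have "a \<le> sqrt (real (card C) * (real n - 1))"
        using a_bound_cover[OF U I irr symE C cov cardP[unfolded Pr_def] n1] unfolding a_def .
      also have "\<dots> \<le> sqrt (real \<beta> * (real n - 1))"
        using cCb n1 by (intro real_sqrt_le_mono mult_right_mono) auto
      finally show ?thesis .
    qed
    have part1: "\<alpha> < 1/2 \<longrightarrow> S_k k ?A \<le>
             (if k \<le> \<beta> then \<alpha> * (real n + 2 * real k - 2) + (1 - 2 * \<alpha>) * sqrt (real k * (real n - 1))
              else if k \<le> n - \<beta> then \<alpha> * (real n + 2 * real k - 2) + (1 - 2 * \<alpha>) * sqrt (real \<beta> * (real n - 1))
              else \<alpha> * (real n + 2 * real k - 2) + (1 - 2 * \<alpha>) * sqrt (real (n - k) * (real n - 1)))"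
    proof
      assume al: "\<alpha> < 1/2"
      have Seq: "S_k k ?A = \<alpha> * q + (1 - 2 * \<alpha>) * a" using S_eq q_eq by (simp add: algebra_simps)
      have c1: "\<alpha> * q \<le> \<alpha> * (real n + 2 * real k - 2)" using qb alpha by (intro mult_left_mono) auto
      have gen: "S_k k ?A \<le> \<alpha> * (real n + 2 * real k - 2) + (1 - 2 * \<alpha>) * r" if "a \<le> r" for r
      proof -
        have "(1 - 2 * \<alpha>) * a \<le> (1 - 2 * \<alpha>) * r" using that al by (intro mult_left_mono) auto
        thus ?thesis using Seq c1 by linarith
      qed
      show "S_k k ?A \<le> (if k \<le> \<beta> then \<alpha> * (real n + 2 * real k - 2) + (1 - 2 * \<alpha>) * sqrt (real k * (real n - 1))
              else if k \<le> n - \<beta> then \<alpha> * (real n + 2 * real k - 2) + (1 - 2 * \<alpha>) * sqrt (real \<beta> * (real n - 1))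
              else \<alpha> * (real n + 2 * real k - 2) + (1 - 2 * \<alpha>) * sqrt (real (n - k) * (real n - 1)))"
        using gen[OF ak] gen[OF ab] gen[OF ank] by simp
    qed
    have part2: "1/2 \<le> \<alpha> \<longrightarrow> S_k k ?A \<le> \<alpha> * (real n + 2 * real k - 2)"
    proof
      assume al: "1/2 \<le> \<alpha>"
      have Seq: "S_k k ?A = (1 - \<alpha>) * q + (2 * \<alpha> - 1) * s" using S_eq q_eq by (simp add: algebra_simps)
      have "(1 - \<alpha>) * q \<le> (1 - \<alpha>) * (real n + 2 * real k - 2)" using qb alpha by (intro mult_left_mono) auto
      moreover have "(2 * \<alpha> - 1) * s \<le> (2 * \<alpha> - 1) * (real n + real k - 2)" using sb al by (intro mult_left_mono) auto
      moreover have "(2 * \<alpha> - 1) * real k \<ge> 0" using al by simp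
      ultimately show "S_k k ?A \<le> \<alpha> * (real n + 2 * real k - 2)" using Seq by (simp add: algebra_simps)
    qed
    show ?thesis using part1 part2 by blast
  qed
qed

end
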